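(* Let $U$ and $V$ be finite sets and let $E\subseteq U\times U$ and $F\subseteq V\times V$ be symmetric. Then exactly one of the following holds: (1) for all $\alpha\in W(U,E)$ and $\beta\in W(V,F)$, the graphs $(U,\alpha)$ and $(V,\beta)$ are not weakly disjoint; (2) there is a full subset $A\subseteq W(U,E)$ such that for each $\alpha\in A$ there is a full subset $B_\alpha\subseteq W(V,F)$ with $(U,\alpha)$ and $(V,\beta)$ weakly disjoint for every $\beta\in B_\alpha$. The same dichotomy holds with "weakly disjoint" replaced by "strongly disjoint" in both statements.
   Context: A weight function on a finite set $U$ is $\alpha:U\times U\to\mathbb{R}$ with $\alpha\ge0$, symmetric, summing to $1$; degree $p(u)=\sum_{u'}\alpha(u,u')$. A graph is $(U,\alpha)$. $W(U,E)$ is the set of weight functions $\alpha$ on $U$ with $\{(u,u'):\alpha(u,u')>0\}=E$; it is identified with a bounded open subset of $\mathbb{R}^d$, $d$ being the number of unordered pairs $\{u,u'\}$ with $(u,u')\in E$ minus one (coordinates are the weights of the undirected edges, one removed by normalization). If $B\subseteq\mathbb{R}^d$ is bounded and open, a set $A\subseteq B$ is full if it is open and dense in $B$ and has the same $d$-dimensional Lebesgue measure as $B$. For graphs $G=(U,\alpha)$, $H=(V,\beta)$ with degrees $p,q$, a weight joining is a weight function $\gamma$ on $U\times V$ with degree $r(u,v)=\sum_{(u',v')}\gamma((u,v),(u',v'))$ satisfying $\sum_v r(u,v)=p(u)$, $\sum_u r(u,v)=q(v)$, $p(u)\sum_{\tilde v}\gamma((u,v),(u',\tilde v))=\alpha(u,u')r(u,v)$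 and $q(v)\sum_{\tilde u}\gamma((u,v),(\tilde u,v'))=\beta(v,v')r(u,v)$ for all $u,u',v,v'$. $G,H$ are strongly disjoint if the only weight joining is $\alpha\otimes\beta$, $(\alpha\otimes\beta)((u,v),(u',v'))=\alpha(u,u')\beta(v,v')$, and weakly disjoint if every weight joining has degree function $r(u,v)=p(u)q(v)$. *)

theory Defs
  imports "HOL-Analysis.Analysis"
begin

definition weight_fun :: "'s set \<Rightarrow> ('s \<times> 's \<Rightarrow> real) \<Rightarrow> bool" where
  "weight_fun S a \<longleftrightarrow>
     (\<forall>x y. 0 \<le> a (x, y)) \<and> (\<forall>x y. a (x, y) = a (y, x)) \<and>
     (\<forall>x y. (x, y) \<notin> S \<times> S \<longrightarrow> a (x, y) = 0) \<and>
     (\<Sum>z\<in>S \<times> S. a z) = 1"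

definition deg :: "'s set \<Rightarrow> ('s \<times> 's \<Rightarrow> real) \<Rightarrow> 's \<Rightarrow> real" where
  "deg S a x = (\<Sum>y\<in>S. a (x, y))"

definition Wset :: "'u set \<Rightarrow> ('u \<times> 'u) set \<Rightarrow> ('u \<times> 'u \<Rightarrow> real) set" where
  "Wset U E = {a. weight_fun U a \<and> {z. a z > 0} = E}"

text \<open>Undirected edges of E, a distinguished edge removed by normalisation,
  and the coordinate chart W(U,E) \<rightarrow> R^d.\<close>
definition uedges :: "('u \<times> 'u) set \<Rightarrow> 'u set set" where
  "uedges E = {{u, u'} | u u'. (u, u') \<in> E}"

definition removed_edge :: "('u \<times> 'u) set \<Rightarrow> 'u set" where
  "removed_edge E = (SOME e. e \<in> uedges E)"

definition coord_edges :: "('u \<times> 'u) set \<Rightarrow> 'u set set" where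
  "coord_edges E = uedges E - {removed_edge E}"

definition edge_weight :: "('u \<times> 'u \<Rightarrow> real) \<Rightarrow> 'u set \<Rightarrow> real" where
  "edge_weight a e = a (SOME p. e = {fst p, snd p})"

definition chart :: "('u \<times> 'u) set \<Rightarrow> ('u \<times> 'u \<Rightarrow> real) \<Rightarrow> ('u set \<Rightarrow> real)" where
  "chart E a = restrict (edge_weight a) (coord_edges E)"

definition full_in :: "'i set \<Rightarrow> ('i \<Rightarrow> real) set \<Rightarrow> ('i \<Rightarrow> real) set \<Rightarrow> bool" where
  "full_in I B A \<longleftrightarrow>
     A \<subseteq> B \<and>
     openin (product_topology (\<lambda>_. euclideanreal) I) A \<and>
     B \<subseteq> (product_topology (\<lambda>_. euclideanreal) I) closure_of A \<and>
     emeasure (PiM I (\<lambda>_. lborel)) A = emeasure (PiM I (\<lambda>_. lborel)) B"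

definition full_W :: "'u set \<Rightarrow> ('u \<times> 'u) set \<Rightarrow> ('u \<times> 'u \<Rightarrow> real) set \<Rightarrow> bool" where
  "full_W U E A \<longleftrightarrow> A \<subseteq> Wset U E \<and>
     full_in (coord_edges E) (chart E ` Wset U E) (chart E ` A)"

definition weight_joining ::
  "'u set \<Rightarrow> ('u \<times> 'u \<Rightarrow> real) \<Rightarrow> 'v set \<Rightarrow> ('v \<times> 'v \<Rightarrow> real)
    \<Rightarrow> (('u \<times> 'v) \<times> ('u \<times> 'v) \<Rightarrow> real) \<Rightarrow> bool" where
  "weight_joining U a V b g \<longleftrightarrow>
     weight_fun (U \<times> V) g \<and>
     (\<forall>u\<in>U. (\<Sum>v\<in>V. deg (U \<times> V) g (u, v)) = deg U a u) \<and>
     (\<forall>v\<in>V. (\<Sum>u\<in>U. deg (U \<times> V) g (u, v)) = deg V b v) \<and>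
     (\<forall>u\<in>U. \<forall>u'\<in>U. \<forall>v\<in>V.
        deg U a u * (\<Sum>v'\<in>V. g ((u, v), (u', v'))) = a (u, u') * deg (U \<times> V) g (u, v)) \<and>
     (\<forall>v\<in>V. \<forall>v'\<in>V. \<forall>u\<in>U.
        deg V b v * (\<Sum>u'\<in>U. g ((u, v), (u', v'))) = b (v, v') * deg (U \<times> V) g (u, v))"

definition strongly_disjoint ::
  "'u set \<Rightarrow> ('u \<times> 'u \<Rightarrow> real) \<Rightarrow> 'v set \<Rightarrow> ('v \<times> 'v \<Rightarrow> real) \<Rightarrow> bool" where
  "strongly_disjoint U a V b \<longleftrightarrow>
     (\<forall>g. weight_joining U a V b g \<longrightarrow>
        (\<forall>x\<in>U \<times> V. \<forall>y\<in>U \<times> V. g (x, y) = a (fst x, fst y) * b (snd x, snd y)))"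

definition weakly_disjoint ::
  "'u set \<Rightarrow> ('u \<times> 'u \<Rightarrow> real) \<Rightarrow> 'v set \<Rightarrow> ('v \<times> 'v \<Rightarrow> real) \<Rightarrow> bool" where
  "weakly_disjoint U a V b \<longleftrightarrow>
     (\<forall>g. weight_joining U a V b g \<longrightarrow>
        (\<forall>u\<in>U. \<forall>v\<in>V. deg (U \<times> V) g (u, v) = deg U a u * deg V b v))"

end

theory Submission
  imports Defs "HOL-Computational_Algebra.Polynomial" "Jordan_Normal_Form.Determinant"
begin

inductive_set polyfun :: "'i set \<Rightarrow> (('i \<Rightarrow> real) \<Rightarrow> real) set" for I where
  pf_const: "(\<lambda>_. c) \<in> polyfun I"
| pf_proj: "i \<in> I \<Longrightarrow> (\<lambda>x. x i) \<in> polyfun I"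
| pf_add: "f \<in> polyfun I \<Longrightarrow> g \<in> polyfun I \<Longrightarrow> (\<lambda>x. f x + g x) \<in> polyfun I"
| pf_mult: "f \<in> polyfun I \<Longrightarrow> g \<in> polyfun I \<Longrightarrow> (\<lambda>x. f x * g x) \<in> polyfun I"

lemma pf_uminus: "f \<in> polyfun I \<Longrightarrow> (\<lambda>x. - f x) \<in> polyfun I"
  using pf_mult[OF pf_const[of "-1"], of f] by simp

lemma pf_diff: "f \<in> polyfun I \<Longrightarrow> g \<in> polyfun I \<Longrightarrow> (\<lambda>x. f x - g x) \<in> polyfun I"
  using pf_add[OF _ pf_uminus, of f I g] by simp

lemma pf_div_const: "f \<in> polyfun I \<Longrightarrow> (\<lambda>x. f x / c) \<in> polyfun I"
  using pf_mult[OF _ pf_const[of "1/c"], of f] by simp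

lemma pf_sum: "finite S \<Longrightarrow> (\<And>s. s \<in> S \<Longrightarrow> (\<lambda>x. f x s) \<in> polyfun I) \<Longrightarrow> (\<lambda>x. \<Sum>s\<in>S. f x s) \<in> polyfun I"
proof (induction S rule: finite_induct)
  case empty then show ?case using pf_const[of 0] by simp
next
  case (insert a S) then show ?case using pf_add[of "\<lambda>x. f x a" I "\<lambda>x. \<Sum>s\<in>S. f x s"] by simp
qed

lemma pf_prod: "finite S \<Longrightarrow> (\<And>s. s \<in> S \<Longrightarrow> (\<lambda>x. f x s) \<in> polyfun I) \<Longrightarrow> (\<lambda>x. \<Prod>s\<in>S. f x s) \<in> polyfun I"
proof (induction S rule: finite_induct)
  case empty then show ?case using pf_const[of 1] by simp
next
  case (insert a S) then show ?case using pf_mult[of "\<lambda>x. f x a" I "\<lambda>x. \<Prod>s\<in>S. f x s"] by simp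
qed

lemma pf_local: "f \<in> polyfun I \<Longrightarrow> (\<And>i. i \<in> I \<Longrightarrow> x i = y i) \<Longrightarrow> f x = f y"
  by (induction f rule: polyfun.induct) auto

lemma pf_continuous: "f \<in> polyfun I \<Longrightarrow> continuous_map (product_topology (\<lambda>_. euclideanreal) I) euclideanreal f"
proof (induction f rule: polyfun.induct)
  case (pf_proj i) then show ?case by (metis continuous_map_product_coordinates)
qed (auto intro: continuous_map_add continuous_map_real_mult)

lemma pf_measurable: "f \<in> polyfun I \<Longrightarrow> f \<in> borel_measurable (PiM I (\<lambda>_. lborel))"
proof (induction f rule: polyfun.induct)
  case (pf_proj i)
  then show ?case by (simp add: measurable_component_singleton)
qed auto

lemma pf_coeffs:
  assumes "f \<in> polyfun (insert i J)" "i \<notin> J"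
  shows "\<exists>P. (\<forall>n. (\<lambda>x. coeff (P x) n) \<in> polyfun J) \<and> (\<forall>x y. f (x(i:=y)) = poly (P x) y)"
  using assms(1)
proof (induction f rule: polyfun.induct)
  case (pf_const c)
  show ?case
    by (rule exI[of _ "\<lambda>x. [:c:]"]) (auto simp: coeff_pCons split: nat.splits intro: polyfun.intros)
next
  case (pf_proj j)
  show ?case
  proof (cases "j = i")
    case True
    show ?thesis
      by (rule exI[of _ "\<lambda>x. [:0,1:]"]) (auto simp: True coeff_pCons split: nat.splits intro: polyfun.intros)
  next
    case False
    then have "j \<in> J" using pf_proj by auto
    have "(\<lambda>x. coeff [:x j:] n) \<in> polyfun J" for n
      using \<open>j \<in> J\<close> by (cases n) (auto intro: polyfun.intros)
    then show ?thesis using False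
      by (intro exI[of _ "\<lambda>x. [:x j:]"]) auto
  qed
next
  case (pf_add f g)
  then obtain P Q where P: "\<forall>n. (\<lambda>x. coeff (P x) n) \<in> polyfun J" "\<forall>x y. f (x(i:=y)) = poly (P x) y"
    and Q: "\<forall>n. (\<lambda>x. coeff (Q x) n) \<in> polyfun J" "\<forall>x y. g (x(i:=y)) = poly (Q x) y" by blast
  show ?case
  proof (intro exI[of _ "\<lambda>x. P x + Q x"] conjI allI)
    fix n show "(\<lambda>x. coeff (P x + Q x) n) \<in> polyfun J" unfolding coeff_add by (rule polyfun.pf_add[OF P(1)[rule_format] Q(1)[rule_format]])
  next
    fix x y show "f (x(i:=y)) + g (x(i:=y)) = poly (P x + Q x) y" using P(2) Q(2) by simp
  qed
next
  case (pf_mult f g)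
  then obtain P Q where P: "\<forall>n. (\<lambda>x. coeff (P x) n) \<in> polyfun J" "\<forall>x y. f (x(i:=y)) = poly (P x) y"
    and Q: "\<forall>n. (\<lambda>x. coeff (Q x) n) \<in> polyfun J" "\<forall>x y. g (x(i:=y)) = poly (Q x) y" by blast
  show ?case
  proof (intro exI[of _ "\<lambda>x. P x * Q x"] conjI allI)
    fix n show "(\<lambda>x. coeff (P x * Q x) n) \<in> polyfun J" using P(1) Q(1) by (auto simp add: coeff_mult intro!: pf_sum polyfun.pf_mult)
  next
    fix x y show "f (x(i:=y)) * g (x(i:=y)) = poly (P x * Q x) y" using P(2) Q(2) by simp
  qed
qed

lemma pf_null:
  assumes "finite I" "f \<in> polyfun I" "f x0 \<noteq> 0"
  shows "{x \<in> space (PiM I (\<lambda>_. lborel)). f x = 0} \<in> null_sets (PiM I (\<lambda>_. lborel))"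
  using assms
proof (induction I arbitrary: f x0 rule: finite_induct)
  case empty
  have eq: "{x \<in> space (PiM {} (\<lambda>_. lborel)). f x = 0} = {}"
  proof safe
    fix x assume "x \<in> space (PiM {} (\<lambda>_. lborel :: real measure))" "f x = 0"
    moreover have "f x = f x0" using pf_local[OF empty(1)] by auto
    ultimately show "x \<in> {}" using empty by simp
  qed
  show ?case by (subst eq) simp
next
  case (insert i J)
  interpret product_sigma_finite "\<lambda>_. lborel :: real measure" by standard
  obtain P where P: "\<forall>n. (\<lambda>x. coeff (P x) n) \<in> polyfun J" "\<forall>x y. f (x(i:=y)) = poly (P x) y"
    using pf_coeffs[OF insert(4) insert(2)] by blast
  have "poly (P x0) (x0 i) \<noteq> 0" using P(2)[rule_format, of x0 "x0 i"] insert(5) by simp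
  then have "P x0 \<noteq> 0" by auto
  then obtain n where n: "coeff (P x0) n \<noteq> 0" by (metis leading_coeff_0_iff)
  define N where "N = {x \<in> space (PiM J (\<lambda>_. lborel)). coeff (P x) n = 0}"
  have Nnull: "N \<in> null_sets (PiM J (\<lambda>_. lborel))"
    unfolding N_def using insert.IH[OF P(1)[rule_format, of n] n] .
  define Z where "Z = {x \<in> space (PiM (insert i J) (\<lambda>_. lborel)). f x = 0}"
  have fm: "f \<in> borel_measurable (PiM (insert i J) (\<lambda>_. lborel))" using pf_measurable[OF insert(4)] .
  have Zm: "Z \<in> sets (PiM (insert i J) (\<lambda>_. lborel))" unfolding Z_def using fm by measurable
  have "emeasure (PiM (insert i J) (\<lambda>_. lborel)) Z = (\<integral>\<^sup>+ x. indicator Z x \<partial>(PiM (insert i J) (\<lambda>_. lborel)))"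
    using Zm by simp
  also have "\<dots> = (\<integral>\<^sup>+ x. (\<integral>\<^sup>+ y. indicator Z (x(i := y)) \<partial>lborel) \<partial>(PiM J (\<lambda>_. lborel)))"
    using Zm by (intro product_nn_integral_insert) (auto simp: insert)
  also have "\<dots> = (\<integral>\<^sup>+ x. 0 \<partial>(PiM J (\<lambda>_. lborel :: real measure)))"
  proof (intro nn_integral_cong_AE)
    have "AE x in PiM J (\<lambda>_. lborel). x \<notin> N" using Nnull by (rule AE_not_in)
    moreover have "AE x in PiM J (\<lambda>_. lborel). x \<in> space (PiM J (\<lambda>_. lborel))" by (rule AE_space)
    ultimately show "AE x in PiM J (\<lambda>_. lborel). (\<integral>\<^sup>+ y. indicator Z (x(i := y)) \<partial>lborel) = 0"
    proof eventually_elim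
      case (elim x)
      then have "P x \<noteq> 0" by (auto simp: N_def)
      then have fin: "finite {y. poly (P x) y = 0}" by (rule poly_roots_finite)
      have "(\<integral>\<^sup>+ y. indicator Z (x(i := y)) \<partial>lborel) \<le> (\<integral>\<^sup>+ y. indicator {y. poly (P x) y = 0} y \<partial>lborel)"
        by (intro nn_integral_mono) (auto simp: Z_def P(2) split: split_indicator)
      also have "\<dots> = emeasure lborel {y. poly (P x) y = 0}"
        using null_setsD2[OF finite_imp_null_set_lborel[OF fin]] by simp
      also have "\<dots> = 0" using finite_imp_null_set_lborel[OF fin] by auto
      finally show ?case by simp
    qed
  qed
  also have "\<dots> = 0" by simp
  finally show ?case using Zm unfolding Z_def by (auto simp: null_sets_def)
qed

lemma box_in_open:
  assumes "finite I" "openin (product_topology (\<lambda>_. euclideanreal) I) S" "x \<in> S"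
  shows "\<exists>d>0. PiE I (\<lambda>i. {x i - d <..< x i + d}) \<subseteq> S"
proof -
  obtain W where W: "\<forall>i\<in>I. openin euclideanreal (W i)" "x \<in> PiE I W" "PiE I W \<subseteq> S"
    using assms(2,3) unfolding openin_product_topology_alt by metis
  have "\<forall>i\<in>I. \<exists>e>0. ball (x i) e \<subseteq> W i"
    using W(1,2) by (auto simp: PiE_def Pi_def open_contains_ball)
  then obtain e where e: "\<forall>i\<in>I. e i > 0 \<and> ball (x i) (e i) \<subseteq> W i" by metis
  define d where "d = (if I = {} then 1 else Min (e ` I))"
  have d0: "d > 0" using e assms(1) by (auto simp: d_def)
  have "d \<le> e i" if "i \<in> I" for i using that assms(1) by (auto simp: d_def)
  then have "{x i - d <..< x i + d} \<subseteq> W i" if "i \<in> I" for i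
    using e that by (force simp: ball_def dist_real_def)
  then have "PiE I (\<lambda>i. {x i - d <..< x i + d}) \<subseteq> PiE I W" by (rule PiE_mono)
  then show ?thesis using d0 W(3) by blast
qed

lemma box_pos:
  fixes d :: real
  assumes "finite I" "d > 0"
  shows "emeasure (PiM I (\<lambda>_. lborel)) (PiE I (\<lambda>i. {x i - d <..< x i + d})) > 0"
proof -
  interpret product_sigma_finite "\<lambda>_. lborel :: real measure" by standard
  have "emeasure (PiM I (\<lambda>_. lborel)) (PiE I (\<lambda>i. {x i - d <..< x i + d})) = (\<Prod>i\<in>I. ennreal (2*d))"
    using assms by (subst emeasure_PiM) auto
  also have "\<dots> = ennreal ((2*d) ^ card I)" using assms by (simp add: ennreal_power)
  also have "\<dots> > 0" using assms by simp
  finally show ?thesis .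
qed

lemma full_nonzero:
  assumes I: "finite I" and O: "openin (product_topology (\<lambda>_. euclideanreal) I) Om"
    and Om: "Om \<in> sets (PiM I (\<lambda>_. lborel))" and f: "f \<in> polyfun I" and x0: "f x0 \<noteq> 0"
  shows "full_in I Om (Om \<inter> {x. f x \<noteq> 0})"
proof -
  let ?T = "product_topology (\<lambda>_. euclideanreal) I"
  let ?M = "PiM I (\<lambda>_. lborel :: real measure)"
  define Z where "Z = {x \<in> space ?M. f x = 0}"
  have Zn: "Z \<in> null_sets ?M" unfolding Z_def using pf_null[OF I f x0] .
  have sp: "space ?M = topspace ?T" by (simp add: space_PiM)
  have Osub: "Om \<subseteq> topspace ?T" using O by (rule openin_subset)
  have eqZ: "Om \<inter> {x. f x \<noteq> 0} = Om - Z" using Osub sp by (auto simp: Z_def)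
  have op: "openin ?T (Om \<inter> {x. f x \<noteq> 0})"
  proof -
    have "openin ?T {x \<in> topspace ?T. f x \<in> -{0}}"
      by (rule openin_continuous_map_preimage[OF pf_continuous[OF f]]) auto
    then have "openin ?T (Om \<inter> {x \<in> topspace ?T. f x \<in> -{0}})" by (rule openin_Int[OF O])
    moreover have "Om \<inter> {x \<in> topspace ?T. f x \<in> -{0}} = Om \<inter> {x. f x \<noteq> 0}" using Osub by auto
    ultimately show ?thesis by simp
  qed
  have cl: "Om \<subseteq> ?T closure_of (Om \<inter> {x. f x \<noteq> 0})"
  proof
    fix x assume xO: "x \<in> Om"
    show "x \<in> ?T closure_of (Om \<inter> {x. f x \<noteq> 0})"
      unfolding in_closure_of
    proof (intro conjI allI impI)
      show "x \<in> topspace ?T" using xO Osub by auto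
      fix T assume T: "x \<in> T \<and> openin ?T T"
      then have "openin ?T (T \<inter> Om)" using O by auto
      then obtain d where d: "d > 0" "PiE I (\<lambda>i. {x i - d <..< x i + d}) \<subseteq> T \<inter> Om"
        using box_in_open[OF I, of "T \<inter> Om" x] T xO by auto
      show "\<exists>y. y \<in> Om \<inter> {x. f x \<noteq> 0} \<and> y \<in> T"
      proof (rule ccontr)
        assume "\<not> ?thesis"
        then have "PiE I (\<lambda>i. {x i - d <..< x i + d}) \<subseteq> Z"
          using d(2) Osub sp unfolding Z_def by blast
        then have "emeasure ?M (PiE I (\<lambda>i. {x i - d <..< x i + d})) \<le> emeasure ?M Z"
          using Zn by (intro emeasure_mono) auto
        also have "\<dots> = 0" using Zn by auto
        finally show False using box_pos[OF I d(1), of x] by simp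
      qed
    qed
  qed
  have "emeasure ?M (Om \<inter> {x. f x \<noteq> 0}) = emeasure ?M Om"
    unfolding eqZ using Zn Om by (rule emeasure_Diff_null_set)
  then show ?thesis unfolding full_in_def using op cl by auto
qed

definition wfun :: "('u \<times> 'u) set \<Rightarrow> ('u set \<Rightarrow> real) \<Rightarrow> 'u set \<Rightarrow> real" where
  "wfun E x e = (if e = removed_edge E
     then (1 - (\<Sum>e'\<in>coord_edges E. real (card e') * x e')) / real (card e) else x e)"

definition psi :: "('u \<times> 'u) set \<Rightarrow> ('u set \<Rightarrow> real) \<Rightarrow> ('u \<times> 'u \<Rightarrow> real)" where
  "psi E x = (\<lambda>z. if z \<in> E then wfun E x {fst z, snd z} else 0)"

definition Omega :: "('u \<times> 'u) set \<Rightarrow> ('u set \<Rightarrow> real) set" where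
  "Omega E = {x \<in> PiE (coord_edges E) (\<lambda>_. UNIV). (\<forall>e\<in>coord_edges E. 0 < x e) \<and>
      0 < 1 - (\<Sum>e\<in>coord_edges E. real (card e) * x e)}"

locale gsetup =
  fixes U :: "'u set" and E :: "('u \<times> 'u) set"
  assumes finU: "finite U" and EU: "E \<subseteq> U \<times> U" and symE: "sym E" and Ene: "E \<noteq> {}"
begin

lemma finE: "finite E" using finite_subset[OF EU] finU by auto

lemma uedges_img: "uedges E = (\<lambda>z. {fst z, snd z}) ` E"
proof (intro equalityI subsetI)
  fix e assume "e \<in> uedges E"
  then obtain u u' where "e = {u, u'}" "(u, u') \<in> E" by (auto simp: uedges_def)
  then show "e \<in> (\<lambda>z. {fst z, snd z}) ` E" by force
next
  fix e assume "e \<in> (\<lambda>z. {fst z, snd z}) ` E"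
  then obtain z where "z \<in> E" "e = {fst z, snd z}" by auto
  then show "e \<in> uedges E" unfolding uedges_def by (cases z) auto
qed

lemma fin_uedges: "finite (uedges E)" using finE by (simp add: uedges_img)

lemma removed_in: "removed_edge E \<in> uedges E"
proof -
  have "uedges E \<noteq> {}" using Ene by (simp add: uedges_img)
  then have "\<exists>e. e \<in> uedges E" by blast
  then show ?thesis unfolding removed_edge_def by (rule someI_ex)
qed

lemma fin_coord: "finite (coord_edges E)" using fin_uedges by (simp add: coord_edges_def)

lemma card_pos: "e \<in> uedges E \<Longrightarrow> card e > 0"
  by (auto simp: uedges_def card_gt_0_iff)

lemma edge_weight_sym:
  assumes "\<And>x y. a (x, y) = a (y, x)"
  shows "edge_weight a {u, v} = a (u, v)"
proof -
  have "\<exists>p. {u, v} = {fst p, snd p}" by (rule exI[of _ "(u,v)"]) simp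
  then have "{u, v} = {fst (SOME p. {u, v} = {fst p, snd p}), snd (SOME p. {u, v} = {fst p, snd p})}"
    by (rule someI_ex)
  moreover obtain s t where st: "(SOME p. {u, v} = {fst p, snd p}) = (s, t)" by (cases "SOME p. {u, v} = {fst p, snd p}") auto
  ultimately have "{u, v} = {s, t}" by simp
  then have "(u = s \<and> v = t) \<or> (u = t \<and> v = s)" by (simp add: doubleton_eq_iff)
  then show ?thesis unfolding edge_weight_def st using assms by auto
qed

lemma count_sum:
  "(\<Sum>z\<in>E. g {fst z, snd z}) = (\<Sum>e\<in>uedges E. real (card e) * g e)"
proof -
  have "(\<Sum>z\<in>E. g {fst z, snd z}) = (\<Sum>e\<in>(\<lambda>z. {fst z, snd z}) ` E. \<Sum>z\<in>{z. z \<in> E \<and> {fst z, snd z} = e}. g {fst z, snd z})"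
    by (rule sum.image_gen[OF finE])
  also have "\<dots> = (\<Sum>e\<in>uedges E. real (card e) * g e)"
    unfolding uedges_img
  proof (rule sum.cong[OF refl])
    fix e assume "e \<in> (\<lambda>z. {fst z, snd z}) ` E"
    then obtain u v where uv: "(u, v) \<in> E" "e = {u, v}" by auto
    have vu: "(v, u) \<in> E" using uv symE by (auto simp: sym_def)
    have S: "{z. z \<in> E \<and> {fst z, snd z} = e} = {(u, v), (v, u)}"
      using uv vu by (auto simp: doubleton_eq_iff)
    have "card {(u, v), (v, u)} = card {u, v}" by (cases "u = v") auto
    then show "(\<Sum>z\<in>{z. z \<in> E \<and> {fst z, snd z} = e}. g {fst z, snd z}) = real (card e) * g e"
      unfolding S using uv(2)
      by (subst sum.cong[of _ _ _ "\<lambda>_. g e"]) (auto simp: insert_commute)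
  qed
  finally show ?thesis .
qed

lemma W_props:
  assumes "a \<in> Wset U E"
  shows "\<And>z. a z \<ge> 0" "\<And>x y. a (x, y) = a (y, x)" "\<And>z. z \<notin> E \<Longrightarrow> a z = 0"
    "\<And>z. z \<in> E \<Longrightarrow> a z > 0" "(\<Sum>z\<in>E. a z) = 1"
proof -
  show nn: "\<And>z. a z \<ge> 0" using assms by (auto simp: Wset_def weight_fun_def)
  show "\<And>x y. a (x, y) = a (y, x)" using assms by (auto simp: Wset_def weight_fun_def)
  show z0: "\<And>z. z \<notin> E \<Longrightarrow> a z = 0" using assms nn by (force simp: Wset_def less_eq_real_def)
  show "\<And>z. z \<in> E \<Longrightarrow> a z > 0" using assms by (auto simp: Wset_def)
  have "(\<Sum>z\<in>U \<times> U. a z) = 1" using assms by (auto simp: Wset_def weight_fun_def)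
  moreover have "(\<Sum>z\<in>U \<times> U. a z) = (\<Sum>z\<in>E. a z)"
    using EU z0 finU by (intro sum.mono_neutral_right) auto
  ultimately show "(\<Sum>z\<in>E. a z) = 1" by simp
qed

lemma W_edge_sum:
  assumes "a \<in> Wset U E"
  shows "(\<Sum>e\<in>uedges E. real (card e) * edge_weight a e) = 1"
proof -
  have "(\<Sum>z\<in>E. a z) = (\<Sum>z\<in>E. edge_weight a {fst z, snd z})"
    using edge_weight_sym[where a=a, OF W_props(2)[OF assms]] by simp
  then show ?thesis using count_sum W_props(5)[OF assms] by simp
qed

lemma uedges_split:
  "(\<Sum>e\<in>uedges E. g e) = g (removed_edge E) + (\<Sum>e\<in>coord_edges E. g e)"
  unfolding coord_edges_def using fin_uedges removed_in by (simp add: sum.remove)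

lemma psi_W:
  assumes "x \<in> Omega E"
  shows "psi E x \<in> Wset U E"
proof -
  let ?e0 = "removed_edge E"
  have xpos: "\<And>e. e \<in> coord_edges E \<Longrightarrow> x e > 0" and L: "0 < 1 - (\<Sum>e\<in>coord_edges E. real (card e) * x e)"
    using assms by (auto simp: Omega_def)
  have wpos: "wfun E x e > 0" if "e \<in> uedges E" for e
  proof (cases "e = ?e0")
    case True then show ?thesis using L card_pos[OF that] by (simp add: wfun_def)
  next
    case False then show ?thesis using xpos that by (simp add: wfun_def coord_edges_def)
  qed
  have sym': "psi E x (u, v) = psi E x (v, u)" for u v
    using symE by (auto simp: psi_def sym_def insert_commute)
  have pos: "psi E x z > 0 \<longleftrightarrow> z \<in> E" for z
  proof (cases "z \<in> E")
    case True
    then have "{fst z, snd z} \<in> uedges E" by (auto simp: uedges_img)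
    then show ?thesis using wpos True by (simp add: psi_def)
  qed (simp add: psi_def)
  have "(\<Sum>z\<in>U \<times> U. psi E x z) = (\<Sum>z\<in>E. psi E x z)"
    using EU finU by (intro sum.mono_neutral_right) (auto simp: psi_def)
  also have "\<dots> = (\<Sum>z\<in>E. wfun E x {fst z, snd z})" by (simp add: psi_def)
  also have "\<dots> = (\<Sum>e\<in>uedges E. real (card e) * wfun E x e)" by (rule count_sum)
  also have "\<dots> = real (card ?e0) * wfun E x ?e0 + (\<Sum>e\<in>coord_edges E. real (card e) * x e)"
    unfolding uedges_split by (auto simp: wfun_def coord_edges_def intro!: sum.cong)
  also have "\<dots> = 1" using card_pos[OF removed_in] by (simp add: wfun_def)
  finally have s1: "(\<Sum>z\<in>U \<times> U. psi E x z) = 1" .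
  have nn: "psi E x z \<ge> 0" for z using pos[of z] by (cases "z \<in> E") (auto simp: psi_def)
  have out: "(u, v) \<notin> U \<times> U \<Longrightarrow> psi E x (u, v) = 0" for u v using EU by (auto simp: psi_def)
  show ?thesis unfolding Wset_def weight_fun_def using s1 nn sym' out pos by auto
qed

lemma psi_sym: "psi E x (u, v) = psi E x (v, u)"
  using symE by (auto simp: psi_def sym_def insert_commute)

lemma chart_psi:
  assumes "x \<in> Omega E"
  shows "chart E (psi E x) = x"
proof
  fix e
  show "chart E (psi E x) e = x e"
  proof (cases "e \<in> coord_edges E")
    case True
    then obtain u v where uv: "(u, v) \<in> E" "e = {u, v}" "e \<noteq> removed_edge E"
      by (auto simp: coord_edges_def uedges_def)
    have "chart E (psi E x) e = edge_weight (psi E x) {u, v}" using True uv by (simp add: chart_def)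
    also have "\<dots> = psi E x (u, v)" by (rule edge_weight_sym[where a="psi E x", OF psi_sym])
    also have "\<dots> = x e" using uv by (simp add: psi_def wfun_def)
    finally show ?thesis .
  next
    case False
    then show ?thesis using assms by (auto simp: chart_def Omega_def PiE_def extensional_def)
  qed
qed

lemma psi_chart:
  assumes "a \<in> Wset U E"
  shows "psi E (chart E a) = a"
proof
  fix z
  show "psi E (chart E a) z = a z"
  proof (cases "z \<in> E")
    case False then show ?thesis using W_props(3)[OF assms] by (simp add: psi_def)
  next
    case True
    obtain u v where z: "z = (u, v)" by (cases z)
    have ew: "edge_weight a {u, v} = a (u, v)" by (rule edge_weight_sym[where a=a, OF W_props(2)[OF assms]])
    have ue: "{u, v} \<in> uedges E" using True z by (auto simp: uedges_def)
    show ?thesis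
    proof (cases "{u, v} = removed_edge E")
      case True
      have "(\<Sum>e'\<in>coord_edges E. real (card e') * chart E a e') = (\<Sum>e'\<in>coord_edges E. real (card e') * edge_weight a e')"
        by (auto simp: chart_def intro!: sum.cong)
      moreover have "real (card (removed_edge E)) * edge_weight a (removed_edge E) + (\<Sum>e'\<in>coord_edges E. real (card e') * edge_weight a e') = 1"
        using W_edge_sum[OF assms] unfolding uedges_split .
      ultimately show ?thesis using True \<open>z \<in> E\<close> z ew card_pos[OF removed_in]
        by (simp add: psi_def wfun_def field_simps)
    next
      case False
      then have "{u, v} \<in> coord_edges E" using ue by (simp add: coord_edges_def)
      then show ?thesis using False \<open>z \<in> E\<close> z ew by (simp add: psi_def wfun_def chart_def)
    qed
  qed
qed

lemma chart_W: "chart E ` Wset U E = Omega E"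
proof
  show "chart E ` Wset U E \<subseteq> Omega E"
  proof
    fix x assume "x \<in> chart E ` Wset U E"
    then obtain a where a: "a \<in> Wset U E" "x = chart E a" by auto
    have pos: "edge_weight a e > 0" if eu: "e \<in> uedges E" for e
    proof -
      obtain u v where "(u, v) \<in> E" "e = {u, v}" using eu unfolding uedges_def by blast
      then show ?thesis using edge_weight_sym[where a=a, OF W_props(2)[OF a(1)]] W_props(4)[OF a(1)] by simp
    qed
    have "real (card (removed_edge E)) * edge_weight a (removed_edge E) + (\<Sum>e'\<in>coord_edges E. real (card e') * edge_weight a e') = 1"
      using W_edge_sum[OF a(1)] unfolding uedges_split .
    moreover have "real (card (removed_edge E)) * edge_weight a (removed_edge E) > 0"
      using pos[OF removed_in] card_pos[OF removed_in] by simp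
    moreover have "(\<Sum>e'\<in>coord_edges E. real (card e') * x e') = (\<Sum>e'\<in>coord_edges E. real (card e') * edge_weight a e')"
      using a by (auto simp: chart_def intro!: sum.cong)
    ultimately show "x \<in> Omega E" using a pos
      by (auto simp: Omega_def chart_def coord_edges_def)
  qed
next
  show "Omega E \<subseteq> chart E ` Wset U E"
  proof
    fix x assume "x \<in> Omega E"
    then show "x \<in> chart E ` Wset U E" using chart_psi psi_W by (metis image_eqI)
  qed
qed

lemma psi_polyfun: "(\<lambda>x. psi E x z) \<in> polyfun (coord_edges E)"
proof (cases "z \<in> E")
  case False then show ?thesis by (simp add: psi_def pf_const)
next
  case True
  show ?thesis
  proof (cases "{fst z, snd z} = removed_edge E")
    case True
    have "(\<lambda>x. (1 - (\<Sum>e'\<in>coord_edges E. real (card e') * x e')) / real (card {fst z, snd z})) \<in> polyfun (coord_edges E)"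
      by (intro pf_div_const pf_diff pf_const pf_sum fin_coord pf_mult pf_proj)
    then show ?thesis using True \<open>z \<in> E\<close> by (simp add: psi_def wfun_def)
  next
    case False
    then have "{fst z, snd z} \<in> coord_edges E" using \<open>z \<in> E\<close> by (force simp: coord_edges_def uedges_def)
    then show ?thesis using False \<open>z \<in> E\<close> by (simp add: psi_def wfun_def pf_proj)
  qed
qed

lemma Omega_open: "openin (product_topology (\<lambda>_. euclideanreal) (coord_edges E)) (Omega E)"
proof -
  let ?T = "product_topology (\<lambda>_. euclideanreal) (coord_edges E)"
  let ?L = "\<lambda>x. 1 - (\<Sum>e\<in>coord_edges E. real (card e) * x e)"
  have Lp: "?L \<in> polyfun (coord_edges E)"
    by (intro pf_diff pf_const pf_sum fin_coord pf_mult pf_proj)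
  have o1: "openin ?T ((\<Inter>e\<in>coord_edges E. {x \<in> topspace ?T. x e \<in> {0<..}}) \<inter> topspace ?T)"
    by (intro openin_INT fin_coord openin_continuous_map_preimage[OF pf_continuous[OF pf_proj]]) auto
  have o2: "openin ?T {x \<in> topspace ?T. ?L x \<in> {0<..}}"
    by (intro openin_continuous_map_preimage[OF pf_continuous[OF Lp]]) auto
  have "Omega E = ((\<Inter>e\<in>coord_edges E. {x \<in> topspace ?T. x e \<in> {0<..}}) \<inter> topspace ?T) \<inter> {x \<in> topspace ?T. ?L x \<in> {0<..}}"
    by (auto simp: Omega_def)
  then show ?thesis using openin_Int[OF o1 o2] by simp
qed

lemma Omega_sets: "Omega E \<in> sets (PiM (coord_edges E) (\<lambda>_. lborel))"
proof -
  let ?L = "\<lambda>x. 1 - (\<Sum>e\<in>coord_edges E. real (card e) * x e)"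
  have Lp: "?L \<in> borel_measurable (PiM (coord_edges E) (\<lambda>_. lborel))"
    by (intro pf_measurable pf_diff pf_const pf_sum fin_coord pf_mult pf_proj)
  have "Omega E = {x \<in> space (PiM (coord_edges E) (\<lambda>_. lborel)). (\<forall>e\<in>coord_edges E. 0 < x e) \<and> 0 < ?L x}"
    by (auto simp: Omega_def space_PiM)
  also have "\<dots> \<in> sets (PiM (coord_edges E) (\<lambda>_. lborel))"
    using Lp fin_coord by measurable
  finally show ?thesis .
qed

lemma W_nonempty: "Wset U E \<noteq> {}"
proof -
  define a where "a = (\<lambda>z. if z \<in> E then 1 / real (card E) else 0)"
  have cE: "card E > 0" using finE Ene by (simp add: card_gt_0_iff)
  have "(\<Sum>z\<in>U \<times> U. a z) = (\<Sum>z\<in>E. a z)"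
    using EU finU by (intro sum.mono_neutral_right) (auto simp: a_def)
  also have "\<dots> = 1" using cE by (simp add: a_def)
  finally have "a \<in> Wset U E" using EU symE cE
    by (auto simp: Wset_def weight_fun_def a_def sym_def)
  then show ?thesis by auto
qed

end

lemma full_W_nonempty:
  assumes "gsetup U E" "full_W U E A"
  shows "A \<noteq> {}"
proof
  assume "A = {}"
  then have "chart E ` Wset U E \<subseteq> {}"
    using assms(2) by (simp add: full_W_def full_in_def closure_of_empty)
  then show False using gsetup.W_nonempty[OF assms(1)] by auto
qed

lemma full_W_from:
  assumes G: "gsetup U E" and f: "f \<in> polyfun (coord_edges E)" and x0: "f x0 \<noteq> 0"
  shows "full_W U E (psi E ` (Omega E \<inter> {x. f x \<noteq> 0}))"
proof -
  interpret gsetup U E by fact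
  have cA: "chart E ` (psi E ` (Omega E \<inter> {x. f x \<noteq> 0})) = Omega E \<inter> {x. f x \<noteq> 0}"
  proof -
    have "chart E ` (psi E ` (Omega E \<inter> {x. f x \<noteq> 0})) = (\<lambda>x. chart E (psi E x)) ` (Omega E \<inter> {x. f x \<noteq> 0})"
      by (simp add: image_image)
    also have "\<dots> = (\<lambda>x. x) ` (Omega E \<inter> {x. f x \<noteq> 0})"
      by (rule image_cong[OF refl]) (simp add: chart_psi)
    finally show ?thesis by simp
  qed
  have "full_in (coord_edges E) (Omega E) (Omega E \<inter> {x. f x \<noteq> 0})"
    by (rule full_nonzero[OF fin_coord Omega_open Omega_sets f x0])
  moreover have "psi E ` (Omega E \<inter> {x. f x \<noteq> 0}) \<subseteq> Wset U E" using psi_W by auto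
  ultimately show ?thesis unfolding full_W_def cA chart_W by simp
qed

lemma dichotomy:
  fixes U :: "'u set" and V :: "'v set" and E F
    and Pr :: "('u \<times> 'u \<Rightarrow> real) \<Rightarrow> ('v \<times> 'v \<Rightarrow> real) \<Rightarrow> bool"
    and D :: "('u set \<Rightarrow> real) \<Rightarrow> ('v set \<Rightarrow> real) \<Rightarrow> real"
  assumes GE: "gsetup U E" and GF: "gsetup V F"
    and Dx: "\<And>y. (\<lambda>x. D x y) \<in> polyfun (coord_edges E)"
    and Dy: "\<And>x. (\<lambda>y. D x y) \<in> polyfun (coord_edges F)"
    and char: "\<And>a b. a \<in> Wset U E \<Longrightarrow> b \<in> Wset V F \<Longrightarrow> Pr a b \<longleftrightarrow> D (chart E a) (chart F b) \<noteq> 0"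
  shows "(\<forall>a\<in>Wset U E. \<forall>b\<in>Wset V F. \<not> Pr a b) \<longleftrightarrow>
          \<not> (\<exists>A. full_W U E A \<and> (\<forall>a\<in>A. \<exists>B. full_W V F B \<and> (\<forall>b\<in>B. Pr a b)))"
proof
  assume H: "\<forall>a\<in>Wset U E. \<forall>b\<in>Wset V F. \<not> Pr a b"
  show "\<not> (\<exists>A. full_W U E A \<and> (\<forall>a\<in>A. \<exists>B. full_W V F B \<and> (\<forall>b\<in>B. Pr a b)))"
  proof
    assume "\<exists>A. full_W U E A \<and> (\<forall>a\<in>A. \<exists>B. full_W V F B \<and> (\<forall>b\<in>B. Pr a b))"
    then obtain A where A: "full_W U E A" "\<forall>a\<in>A. \<exists>B. full_W V F B \<and> (\<forall>b\<in>B. Pr a b)" by blast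
    obtain a where a: "a \<in> A" using full_W_nonempty[OF GE A(1)] by blast
    obtain B where B: "full_W V F B" "\<forall>b\<in>B. Pr a b" using A(2) a by blast
    obtain b where b: "b \<in> B" using full_W_nonempty[OF GF B(1)] by blast
    have "a \<in> Wset U E" "b \<in> Wset V F" using A(1) B(1) a b by (auto simp: full_W_def)
    then show False using H B(2) b by blast
  qed
next
  assume N: "\<not> (\<exists>A. full_W U E A \<and> (\<forall>a\<in>A. \<exists>B. full_W V F B \<and> (\<forall>b\<in>B. Pr a b)))"
  show "\<forall>a\<in>Wset U E. \<forall>b\<in>Wset V F. \<not> Pr a b"
  proof (rule ccontr)
    assume "\<not> ?thesis"
    then obtain a0 b0 where ab0: "a0 \<in> Wset U E" "b0 \<in> Wset V F" "Pr a0 b0" by blast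
    define x0 where "x0 = chart E a0"
    define y0 where "y0 = chart F b0"
    have D0: "D x0 y0 \<noteq> 0" using char ab0 by (simp add: x0_def y0_def)
    define A where "A = psi E ` (Omega E \<inter> {x. D x y0 \<noteq> 0})"
    have fA: "full_W U E A" unfolding A_def by (rule full_W_from[OF GE Dx D0])
    have "\<forall>a\<in>A. \<exists>B. full_W V F B \<and> (\<forall>b\<in>B. Pr a b)"
    proof
      fix a assume "a \<in> A"
      then obtain x where x: "x \<in> Omega E" "D x y0 \<noteq> 0" "a = psi E x" by (auto simp: A_def)
      define B where "B = psi F ` (Omega F \<inter> {y. D x y \<noteq> 0})"
      have fB: "full_W V F B" unfolding B_def by (rule full_W_from[OF GF Dy x(2)])
      have "\<forall>b\<in>B. Pr a b"
      proof
        fix b assume "b \<in> B"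
        then obtain y where y: "y \<in> Omega F" "D x y \<noteq> 0" "b = psi F y" by (auto simp: B_def)
        have "a \<in> Wset U E" using x gsetup.psi_W[OF GE] by simp
        moreover have "b \<in> Wset V F" using y gsetup.psi_W[OF GF] by simp
        moreover have "chart E a = x" using x gsetup.chart_psi[OF GE] by simp
        moreover have "chart F b = y" using y gsetup.chart_psi[OF GF] by simp
        ultimately show "Pr a b" using char y(2) by simp
      qed
      then show "\<exists>B. full_W V F B \<and> (\<forall>b\<in>B. Pr a b)" using fB by blast
    qed
    then show False using N fA by blast
  qed
qed

definition lin :: "(('x \<Rightarrow> real) \<Rightarrow> real) \<Rightarrow> bool" where
  "lin L \<longleftrightarrow> (\<forall>f g. L (\<lambda>z. f z + g z) = L f + L g) \<and> (\<forall>c f. L (\<lambda>z. c * f z) = c * L f)"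

definition delta :: "'x \<Rightarrow> 'x \<Rightarrow> real" where
  "delta x = (\<lambda>z. if z = x then 1 else 0)"

lemma lin_zero: "lin L \<Longrightarrow> L (\<lambda>z. 0) = 0"
proof -
  assume "lin L"
  then have H: "\<forall>c f. L (\<lambda>z. c * f z) = c * L f" unfolding lin_def by blast
  show ?thesis using H[rule_format, of 0 "\<lambda>z. 0"] by simp
qed

lemma lin_sum:
  assumes "lin L" "finite J"
  shows "L (\<lambda>z. \<Sum>j\<in>J. c j * f j z) = (\<Sum>j\<in>J. c j * L (f j))"
  using assms(2)
proof (induction J rule: finite_induct)
  case empty then show ?case using lin_zero[OF assms(1)] by simp
next
  case (insert a J)
  have "L (\<lambda>z. \<Sum>j\<in>insert a J. c j * f j z) = L (\<lambda>z. c a * f a z + (\<Sum>j\<in>J. c j * f j z))"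
    using insert by simp
  also have "\<dots> = c a * L (f a) + L (\<lambda>z. \<Sum>j\<in>J. c j * f j z)"
    using assms(1) unfolding lin_def by simp
  finally show ?case using insert by simp
qed

lemma expand_list:
  assumes "distinct xs" "\<And>z. z \<notin> set xs \<Longrightarrow> k z = 0"
  shows "k = (\<lambda>z. \<Sum>j\<in>{0..<length xs}. k (xs ! j) * delta (xs ! j) z)"
proof
  fix z
  show "k z = (\<Sum>j\<in>{0..<length xs}. k (xs ! j) * delta (xs ! j) z)"
  proof (cases "z \<in> set xs")
    case False then show ?thesis using assms(2) by (auto simp: delta_def intro!: sum.neutral)
  next
    case True
    then obtain i where i: "i < length xs" "z = xs ! i" by (auto simp: in_set_conv_nth)
    have "(\<Sum>j\<in>{0..<length xs}. k (xs ! j) * delta (xs ! j) z) = (\<Sum>j\<in>{0..<length xs}. if j = i then k (xs ! i) else 0)"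
      using i assms(1) by (intro sum.cong) (auto simp: delta_def nth_eq_iff_index_eq)
    also have "\<dots> = k (xs ! i)" using i by simp
    finally show ?thesis using i by simp
  qed
qed

definition gram :: "'r set \<Rightarrow> ('r \<Rightarrow> ('x \<Rightarrow> real) \<Rightarrow> real) \<Rightarrow> 'x list \<Rightarrow> real mat" where
  "gram R L xs = mat (length xs) (length xs)
     (\<lambda>(i, j). \<Sum>r\<in>R. L r (delta (xs ! i)) * L r (delta (xs ! j)))"

lemma gram_det:
  assumes R: "finite R" and L: "\<And>r. r \<in> R \<Longrightarrow> lin (L r)" and xs: "distinct xs"
  shows "det (gram R L xs) \<noteq> 0 \<longleftrightarrow>
    (\<forall>k. (\<forall>z. z \<notin> set xs \<longrightarrow> k z = 0) \<and> (\<forall>r\<in>R. L r k = 0) \<longrightarrow> (\<forall>z. k z = 0))"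
proof -
  let ?n = "length xs"
  let ?G = "gram R L xs"
  let ?c = "\<lambda>r i. L r (delta (xs ! i))"
  have G: "?G \<in> carrier_mat ?n ?n" by (simp add: gram_def)
  have Gv: "(?G *\<^sub>v v) $ i = (\<Sum>r\<in>R. ?c r i * (\<Sum>j\<in>{0..<?n}. ?c r j * v $ j))"
    if "i < ?n" "v \<in> carrier_vec ?n" for v i
  proof -
    have "(?G *\<^sub>v v) $ i = (\<Sum>j\<in>{0..<?n}. (\<Sum>r\<in>R. ?c r i * ?c r j) * v $ j)"
      using that by (simp add: gram_def scalar_prod_def)
    also have "\<dots> = (\<Sum>j\<in>{0..<?n}. \<Sum>r\<in>R. ?c r i * (?c r j * v $ j))"
      by (simp add: sum_distrib_right mult.assoc)
    also have "\<dots> = (\<Sum>r\<in>R. ?c r i * (\<Sum>j\<in>{0..<?n}. ?c r j * v $ j))"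
      by (subst sum.swap) (simp add: sum_distrib_left)
    finally show ?thesis .
  qed
  have Lk: "L r (\<lambda>z. \<Sum>j\<in>{0..<?n}. w j * delta (xs ! j) z) = (\<Sum>j\<in>{0..<?n}. w j * ?c r j)"
    if "r \<in> R" for r w
    by (rule lin_sum[OF L[OF that]]) simp
  have "det ?G = 0 \<longleftrightarrow>
    (\<exists>k. (\<forall>z. z \<notin> set xs \<longrightarrow> k z = 0) \<and> (\<forall>r\<in>R. L r k = 0) \<and> (\<exists>z. k z \<noteq> 0))"
  proof
    assume "det ?G = 0"
    then obtain v where v: "v \<in> carrier_vec ?n" "v \<noteq> 0\<^sub>v ?n" "?G *\<^sub>v v = 0\<^sub>v ?n"
      using det_0_iff_vec_prod_zero[OF G] by blast
    define k where "k = (\<lambda>z. \<Sum>j\<in>{0..<?n}. v $ j * delta (xs ! j) z)"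
    have kout: "\<forall>z. z \<notin> set xs \<longrightarrow> k z = 0" by (auto simp: k_def delta_def intro!: sum.neutral)
    have kxs: "k (xs ! i) = v $ i" if "i < ?n" for i
    proof -
      have "k (xs ! i) = (\<Sum>j\<in>{0..<?n}. if j = i then v $ i else 0)"
        unfolding k_def using that xs by (intro sum.cong) (auto simp: delta_def nth_eq_iff_index_eq)
      also have "\<dots> = v $ i" using that by simp
      finally show ?thesis .
    qed
    have dv: "dim_vec v = ?n" using v(1) by simp
    obtain i where i: "i < ?n" "v $ i \<noteq> 0"
    proof -
      have "\<not> (\<forall>i<?n. v $ i = 0)"
      proof
        assume "\<forall>i<?n. v $ i = 0"
        then have "v = 0\<^sub>v ?n" using dv by (intro eq_vecI) auto
        then show False using v(2) by simp
      qed
      then show ?thesis using that by blast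
    qed
    define s where "s r = (\<Sum>j\<in>{0..<?n}. ?c r j * v $ j)" for r
    have "(\<Sum>i\<in>{0..<?n}. v $ i * (?G *\<^sub>v v) $ i) = 0"
      by (rule sum.neutral) (simp add: v(3))
    moreover have "(\<Sum>i\<in>{0..<?n}. v $ i * (?G *\<^sub>v v) $ i) = (\<Sum>r\<in>R. (s r)^2)"
    proof -
      have "(\<Sum>i\<in>{0..<?n}. v $ i * (?G *\<^sub>v v) $ i) = (\<Sum>i\<in>{0..<?n}. \<Sum>r\<in>R. v $ i * ?c r i * s r)"
      proof (intro sum.cong refl)
        fix i assume "i \<in> {0..<?n}"
        then have "(?G *\<^sub>v v) $ i = (\<Sum>r\<in>R. ?c r i * s r)" using Gv[OF _ v(1)] by (simp add: s_def)
        then show "v $ i * (?G *\<^sub>v v) $ i = (\<Sum>r\<in>R. v $ i * ?c r i * s r)"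
          by (simp add: sum_distrib_left mult.assoc)
      qed
      also have "\<dots> = (\<Sum>r\<in>R. \<Sum>i\<in>{0..<?n}. v $ i * ?c r i * s r)" by (rule sum.swap)
      also have "\<dots> = (\<Sum>r\<in>R. (s r)^2)"
      proof (intro sum.cong refl)
        fix r
        have "(\<Sum>i\<in>{0..<?n}. v $ i * ?c r i * s r) = (\<Sum>i\<in>{0..<?n}. ?c r i * v $ i * s r)"
          by (intro sum.cong refl) simp
        also have "\<dots> = (\<Sum>i\<in>{0..<?n}. ?c r i * v $ i) * s r"
          by (simp add: sum_distrib_right)
        finally have "(\<Sum>i\<in>{0..<?n}. v $ i * ?c r i * s r) = (\<Sum>i\<in>{0..<?n}. ?c r i * v $ i) * s r" .
        then show "(\<Sum>i\<in>{0..<?n}. v $ i * ?c r i * s r) = (s r)^2"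
          by (simp add: s_def power2_eq_square)
      qed
      finally show ?thesis .
    qed
    ultimately have ssum: "(\<Sum>r\<in>R. (s r)^2) = 0" by linarith
    have s0: "s r = 0" if r: "r \<in> R" for r
    proof -
      have "\<forall>r\<in>R. (s r)^2 = 0" using sum_nonneg_eq_0_iff[OF R, of "\<lambda>r. (s r)^2"] ssum by simp
      then show ?thesis using r by simp
    qed
    have Lk0: "\<forall>r\<in>R. L r k = 0"
    proof
      fix r assume r: "r \<in> R"
      have "L r k = (\<Sum>j\<in>{0..<?n}. v $ j * ?c r j)" unfolding k_def by (rule Lk[OF r])
      also have "\<dots> = s r" unfolding s_def by (intro sum.cong refl) (rule mult.commute)
      finally show "L r k = 0" using s0[OF r] by simp
    qed
    show "\<exists>k. (\<forall>z. z \<notin> set xs \<longrightarrow> k z = 0) \<and> (\<forall>r\<in>R. L r k = 0) \<and> (\<exists>z. k z \<noteq> 0)"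
    proof (intro exI conjI)
      show "\<forall>z. z \<notin> set xs \<longrightarrow> k z = 0" by (rule kout)
      show "\<forall>r\<in>R. L r k = 0" by (rule Lk0)
      show "k (xs ! i) \<noteq> 0" using kxs[OF i(1)] i(2) by simp
    qed
  next
    assume "\<exists>k. (\<forall>z. z \<notin> set xs \<longrightarrow> k z = 0) \<and> (\<forall>r\<in>R. L r k = 0) \<and> (\<exists>z. k z \<noteq> 0)"
    then obtain k z0 where k: "\<forall>z. z \<notin> set xs \<longrightarrow> k z = 0" "\<forall>r\<in>R. L r k = 0" "k z0 \<noteq> 0" by blast
    define v where "v = vec ?n (\<lambda>i. k (xs ! i))"
    have vc: "v \<in> carrier_vec ?n" by (simp add: v_def)
    have "z0 \<in> set xs" using k by auto
    then obtain i where i: "i < ?n" "xs ! i = z0" by (auto simp: in_set_conv_nth)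
    have vne: "v \<noteq> 0\<^sub>v ?n"
    proof
      assume "v = 0\<^sub>v ?n"
      then have "v $ i = 0" using i by simp
      then show False using i k(3) by (simp add: v_def)
    qed
    have kexp: "k = (\<lambda>z. \<Sum>j\<in>{0..<?n}. k (xs ! j) * delta (xs ! j) z)"
      by (rule expand_list[OF xs]) (use k in auto)
    have "?G *\<^sub>v v = 0\<^sub>v ?n"
    proof (rule eq_vecI)
      fix i assume "i < dim_vec (0\<^sub>v ?n :: real vec)"
      then have i: "i < ?n" by simp
      have "(?G *\<^sub>v v) $ i = (\<Sum>r\<in>R. ?c r i * (\<Sum>j\<in>{0..<?n}. ?c r j * v $ j))" by (rule Gv[OF i vc])
      also have "\<dots> = (\<Sum>r\<in>R. ?c r i * L r k)"
      proof (intro sum.cong refl)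
        fix r assume r: "r \<in> R"
        have "L r k = L r (\<lambda>z. \<Sum>j\<in>{0..<?n}. k (xs ! j) * delta (xs ! j) z)" using kexp by metis
        also have "\<dots> = (\<Sum>j\<in>{0..<?n}. k (xs ! j) * ?c r j)" by (rule Lk[OF r])
        finally have "L r k = (\<Sum>j\<in>{0..<?n}. k (xs ! j) * ?c r j)" .
        then show "?c r i * (\<Sum>j\<in>{0..<?n}. ?c r j * v $ j) = ?c r i * L r k"
          by (simp add: v_def mult.commute)
      qed
      also have "\<dots> = 0" using k(2) by simp
      finally show "(?G *\<^sub>v v) $ i = 0\<^sub>v ?n $ i" using i by simp
    qed (simp add: gram_def)
    then show "det ?G = 0" using det_0_iff_vec_prod_zero[OF G] vc vne by blast
  qed
  then show ?thesis by blast
qed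

lemma det_polyfun:
  assumes "\<And>i j. i < n \<Longrightarrow> j < n \<Longrightarrow> (\<lambda>x. g x i j) \<in> polyfun I"
  shows "(\<lambda>x. det (mat n n (\<lambda>(i, j). g x i j))) \<in> polyfun I"
proof -
  have "(\<lambda>x. det (mat n n (\<lambda>(i, j). g x i j))) =
        (\<lambda>x. \<Sum>p\<in>{p. p permutes {0..<n}}. signof p * (\<Prod>i = 0..<n. g x i (p i)))"
  proof
    fix x
    have "det (mat n n (\<lambda>(i, j). g x i j)) = (\<Sum>p\<in>{p. p permutes {0..<n}}. signof p * (\<Prod>i = 0..<n. mat n n (\<lambda>(i, j). g x i j) $$ (i, p i)))"
      by (rule det_def') simp
    also have "\<dots> = (\<Sum>p\<in>{p. p permutes {0..<n}}. signof p * (\<Prod>i = 0..<n. g x i (p i)))"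
      by (intro sum.cong refl arg_cong2[where f="(*)"] prod.cong) (auto simp: permutes_in_image)
    finally show "det (mat n n (\<lambda>(i, j). g x i j)) = (\<Sum>p\<in>{p. p permutes {0..<n}}. signof p * (\<Prod>i = 0..<n. g x i (p i)))" .
  qed
  also have "\<dots> \<in> polyfun I"
    by (intro pf_sum pf_mult pf_const pf_prod finite_permutations) (auto simp: assms permutes_in_image)
  finally show ?thesis .
qed

lemma sum_prod_split: "(\<Sum>y\<in>A \<times> B. f y) = (\<Sum>x\<in>A. \<Sum>z\<in>B. f (x, z))"
  by (simp add: sum.cartesian_product)

locale wpair =
  fixes U :: "'u set" and E and V :: "'v set" and F and a b
  assumes GE: "gsetup U E" and GF: "gsetup V F" and aW: "a \<in> Wset U E" and bW: "b \<in> Wset V F"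
begin

abbreviation "p \<equiv> deg U a"
abbreviation "q \<equiv> deg V b"

lemma finU: "finite U" using GE by (simp add: gsetup_def)
lemma finV: "finite V" using GF by (simp add: gsetup_def)
lemma EU: "E \<subseteq> U \<times> U" using GE by (simp add: gsetup_def)
lemma FV: "F \<subseteq> V \<times> V" using GF by (simp add: gsetup_def)

lemma a_nn: "a z \<ge> 0" using aW by (cases z) (auto simp: Wset_def weight_fun_def)
lemma b_nn: "b z \<ge> 0" using bW by (cases z) (auto simp: Wset_def weight_fun_def)
lemma a_sym: "a (x, y) = a (y, x)" using aW by (auto simp: Wset_def weight_fun_def)
lemma b_sym: "b (x, y) = b (y, x)" using bW by (auto simp: Wset_def weight_fun_def)
lemma a_out: "x \<notin> U \<or> y \<notin> U \<Longrightarrow> a (x, y) = 0" using aW by (auto simp: Wset_def weight_fun_def)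
lemma b_out: "x \<notin> V \<or> y \<notin> V \<Longrightarrow> b (x, y) = 0" using bW by (auto simp: Wset_def weight_fun_def)
lemma a_E: "a z > 0 \<longleftrightarrow> z \<in> E" using aW by (auto simp: Wset_def)
lemma b_F: "b z > 0 \<longleftrightarrow> z \<in> F" using bW by (auto simp: Wset_def)

lemma p_def': "p u = (\<Sum>u'\<in>U. a (u, u'))" by (simp add: deg_def)
lemma q_def': "q v = (\<Sum>v'\<in>V. b (v, v'))" by (simp add: deg_def)

lemma p_nn: "p u \<ge> 0" unfolding p_def' by (intro sum_nonneg) (simp add: a_nn)
lemma q_nn: "q v \<ge> 0" unfolding q_def' by (intro sum_nonneg) (simp add: b_nn)

lemma p0: "p u = 0 \<Longrightarrow> a (u, u') = 0"
proof -
  assume "p u = 0"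
  show "a (u, u') = 0"
  proof (cases "u' \<in> U")
    case True
    then show ?thesis using \<open>p u = 0\<close> finU sum_nonneg_eq_0_iff[of U "\<lambda>u'. a (u, u')"] a_nn
      by (simp add: p_def')
  qed (simp add: a_out)
qed

lemma q0: "q v = 0 \<Longrightarrow> b (v, v') = 0"
proof -
  assume "q v = 0"
  show "b (v, v') = 0"
  proof (cases "v' \<in> V")
    case True
    then show ?thesis using \<open>q v = 0\<close> finV sum_nonneg_eq_0_iff[of V "\<lambda>v'. b (v, v')"] b_nn
      by (simp add: q_def')
  qed (simp add: b_out)
qed

lemma sum_p: "(\<Sum>u\<in>U. p u) = 1"
  using aW unfolding Wset_def weight_fun_def by (simp add: p_def' sum_prod_split)
lemma sum_q: "(\<Sum>v\<in>V. q v) = 1"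
  using bW unfolding Wset_def weight_fun_def by (simp add: q_def' sum_prod_split)

lemma colsum_a: "(\<Sum>u\<in>U. a (u, u')) = p u'" by (simp add: p_def' a_sym)
lemma colsum_b: "(\<Sum>v\<in>V. b (v, v')) = q v'" by (simp add: q_def' b_sym)

definition "U1 = {u \<in> U. \<exists>u'. (u, u') \<in> E}"
definition "V1 = {v \<in> V. \<exists>v'. (v, v') \<in> F}"

lemma p_pos: "p u > 0 \<longleftrightarrow> u \<in> U1"
proof
  assume "p u > 0"
  have "\<not> (\<forall>u'\<in>U. a (u, u') = 0)"
  proof
    assume "\<forall>u'\<in>U. a (u, u') = 0"
    then have "p u = 0" unfolding p_def' by simp
    then show False using \<open>p u > 0\<close> by simp
  qed
  then obtain u' where "u' \<in> U" "a (u, u') \<noteq> 0" by blast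
  moreover have "a (u, u') \<ge> 0" by (rule a_nn)
  ultimately have "a (u, u') > 0" by linarith
  then have "(u, u') \<in> E" using a_E by blast
  then show "u \<in> U1" using EU by (auto simp: U1_def)
next
  assume "u \<in> U1"
  then obtain u' where u': "u \<in> U" "(u, u') \<in> E" by (auto simp: U1_def)
  then have "u' \<in> U" using EU by auto
  have "a (u, u') > 0" using u' a_E by simp
  also have "a (u, u') \<le> p u" unfolding p_def' using \<open>u' \<in> U\<close> finU a_nn
    by (intro member_le_sum) auto
  finally show "p u > 0" .
qed

lemma q_pos: "q v > 0 \<longleftrightarrow> v \<in> V1"
proof
  assume "q v > 0"
  have "\<not> (\<forall>v'\<in>V. b (v, v') = 0)"
  proof
    assume "\<forall>v'\<in>V. b (v, v') = 0"
    then have "q v = 0" unfolding q_def' by simp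
    then show False using \<open>q v > 0\<close> by simp
  qed
  then obtain v' where "v' \<in> V" "b (v, v') \<noteq> 0" by blast
  moreover have "b (v, v') \<ge> 0" by (rule b_nn)
  ultimately have "b (v, v') > 0" by linarith
  then have "(v, v') \<in> F" using b_F by blast
  then show "v \<in> V1" using FV by (auto simp: V1_def)
next
  assume "v \<in> V1"
  then obtain v' where v': "v \<in> V" "(v, v') \<in> F" by (auto simp: V1_def)
  then have "v' \<in> V" using FV by auto
  have "b (v, v') > 0" using v' b_F by simp
  also have "b (v, v') \<le> q v" unfolding q_def' using \<open>v' \<in> V\<close> finV b_nn
    by (intro member_le_sum) auto
  finally show "q v > 0" .
qed

lemma p_zero_iff: "p u = 0 \<longleftrightarrow> u \<notin> U1" using p_pos[of u] p_nn[of u] by linarith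
lemma q_zero_iff: "q v = 0 \<longleftrightarrow> v \<notin> V1" using q_pos[of v] q_nn[of v] by linarith

definition "Zw k \<longleftrightarrow> (\<forall>u v. (u \<notin> U1 \<or> v \<notin> V1) \<longrightarrow> k (u, v) = 0)"
definition "Sw k \<longleftrightarrow>
   (\<forall>u\<in>U. \<forall>v\<in>V. q v * (\<Sum>u'\<in>U. a (u, u') * k (u', v)) = p u * (\<Sum>v'\<in>V. b (v, v') * k (u, v'))) \<and>
   (\<forall>u\<in>U. (\<Sum>v\<in>V. q v * k (u, v)) = 0) \<and> (\<forall>v\<in>V. (\<Sum>u\<in>U. p u * k (u, v)) = 0)"

end

context wpair
begin

lemma builder:
  assumes Zk: "Zw kap" and Sk: "Sw kap"
    and R1: "\<And>u u' v. u \<in> U \<Longrightarrow> u' \<in> U \<Longrightarrow> v \<in> V \<Longrightarrow>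
               (\<Sum>v'\<in>V. b (v, v') * c ((u, v), (u', v'))) = q v * kap (u, v)"
    and R2: "\<And>u v v'. u \<in> U \<Longrightarrow> v \<in> V \<Longrightarrow> v' \<in> V \<Longrightarrow>
               (\<Sum>u'\<in>U. a (u, u') * c ((u, v), (u', v'))) = p u * kap (u, v)"
    and Sy: "\<And>u u' v v'. a (u, u') * b (v, v') * c ((u, v), (u', v')) = a (u, u') * b (v, v') * c ((u', v'), (u, v))"
    and nz: "kap z0 \<noteq> 0"
  shows "\<not> weakly_disjoint U a V b"
proof -
  define M where "M = (\<Sum>z\<in>(U \<times> V) \<times> (U \<times> V). \<bar>c z\<bar>)"
  have M0: "M \<ge> 0" unfolding M_def by (intro sum_nonneg) auto
  define eps where "eps = 1 / (2 * (M + 1))"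
  have eps0: "eps > 0" using M0 by (simp add: eps_def)
  have cM: "\<bar>c z\<bar> \<le> M" if "z \<in> (U \<times> V) \<times> (U \<times> V)" for z
    unfolding M_def using that finU finV by (intro member_le_sum) auto
  have fac: "1 + eps * c z \<ge> 1/2" if "z \<in> (U \<times> V) \<times> (U \<times> V)" for z
  proof -
    have "\<bar>eps * c z\<bar> = eps * \<bar>c z\<bar>" using eps0 by (simp add: abs_mult)
    also have "\<dots> \<le> eps * M" using cM[OF that] eps0 by (intro mult_left_mono) auto
    also have "\<dots> \<le> 1/2" using M0 by (simp add: eps_def field_simps)
    finally show ?thesis by linarith
  qed
  define g where "g = (\<lambda>z::('u \<times> 'v) \<times> ('u \<times> 'v). a (fst (fst z), fst (snd z)) * b (snd (fst z), snd (snd z)) * (1 + eps * c z))"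
  have g_simp: "g ((u, v), (u', v')) = a (u, u') * b (v, v') * (1 + eps * c ((u, v), (u', v')))" for u v u' v'
    by (simp add: g_def)
  have row1: "(\<Sum>v'\<in>V. g ((u, v), (u', v'))) = a (u, u') * (q v * (1 + eps * kap (u, v)))" for u u' v
  proof (cases "u \<in> U \<and> u' \<in> U \<and> v \<in> V")
    case True
    have "(\<Sum>v'\<in>V. g ((u, v), (u', v'))) = a (u, u') * ((\<Sum>v'\<in>V. b (v, v')) + eps * (\<Sum>v'\<in>V. b (v, v') * c ((u, v), (u', v'))))"
      by (simp add: g_simp sum_distrib_left sum.distrib algebra_simps)
    also have "\<dots> = a (u, u') * (q v * (1 + eps * kap (u, v)))"
      using True R1 by (simp add: q_def' algebra_simps)
    finally show ?thesis .
  next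
    case False
    then have "a (u, u') = 0 \<or> (\<forall>v'. b (v, v') = 0)" using a_out b_out by blast
    then show ?thesis by (auto simp: g_simp q_def')
  qed
  have row2: "(\<Sum>u'\<in>U. g ((u, v), (u', v'))) = b (v, v') * (p u * (1 + eps * kap (u, v)))" for u v v'
  proof (cases "u \<in> U \<and> v \<in> V \<and> v' \<in> V")
    case True
    have "(\<Sum>u'\<in>U. g ((u, v), (u', v'))) = b (v, v') * ((\<Sum>u'\<in>U. a (u, u')) + eps * (\<Sum>u'\<in>U. a (u, u') * c ((u, v), (u', v'))))"
      by (simp add: g_simp sum_distrib_left sum.distrib algebra_simps)
    also have "\<dots> = b (v, v') * (p u * (1 + eps * kap (u, v)))"
      using True R2 by (simp add: p_def' algebra_simps)
    finally show ?thesis .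
  next
    case False
    then have "b (v, v') = 0 \<or> (\<forall>u'. a (u, u') = 0)" using a_out b_out by blast
    then show ?thesis by (auto simp: g_simp p_def')
  qed
  define r where "r x = deg (U \<times> V) g x" for x
  have r_eq: "r (u, v) = p u * q v * (1 + eps * kap (u, v))" for u v
  proof -
    have "r (u, v) = (\<Sum>u'\<in>U. \<Sum>v'\<in>V. g ((u, v), (u', v')))"
      by (simp add: r_def deg_def sum_prod_split)
    also have "\<dots> = (\<Sum>u'\<in>U. a (u, u') * (q v * (1 + eps * kap (u, v))))" by (simp add: row1)
    also have "\<dots> = p u * q v * (1 + eps * kap (u, v))" by (simp add: p_def' sum_distrib_right mult.assoc)
    finally show ?thesis .
  qed
  have E2: "\<forall>u\<in>U. (\<Sum>v\<in>V. q v * kap (u, v)) = 0" and E3: "\<forall>v\<in>V. (\<Sum>u\<in>U. p u * kap (u, v)) = 0"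
    using Sk by (auto simp: Sw_def)
  have marg1: "(\<Sum>v\<in>V. r (u, v)) = p u" if "u \<in> U" for u
  proof -
    have "(\<Sum>v\<in>V. r (u, v)) = p u * ((\<Sum>v\<in>V. q v) + eps * (\<Sum>v\<in>V. q v * kap (u, v)))"
      by (simp add: r_eq sum_distrib_left sum.distrib algebra_simps)
    then show ?thesis using E2 that sum_q by simp
  qed
  have marg2: "(\<Sum>u\<in>U. r (u, v)) = q v" if "v \<in> V" for v
  proof -
    have "(\<Sum>u\<in>U. r (u, v)) = q v * ((\<Sum>u\<in>U. p u) + eps * (\<Sum>u\<in>U. p u * kap (u, v)))"
      by (simp add: r_eq sum_distrib_left sum.distrib algebra_simps)
    then show ?thesis using E3 that sum_p by simp
  qed
  have wf: "weight_fun (U \<times> V) g"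
    unfolding weight_fun_def
  proof (intro conjI allI impI)
    fix x y :: "'u \<times> 'v"
    obtain u v where x: "x = (u, v)" by (cases x)
    obtain u' v' where y: "y = (u', v')" by (cases y)
    show "0 \<le> g (x, y)"
    proof (cases "(x, y) \<in> (U \<times> V) \<times> (U \<times> V)")
      case True
      then show ?thesis using fac[OF True] a_nn b_nn x y
        by (simp add: g_simp)
    next
      case False
      then have "a (u, u') = 0 \<or> b (v, v') = 0" using x y a_out b_out by auto
      then show ?thesis using x y by (auto simp: g_simp)
    qed
    show "g (x, y) = g (y, x)" using Sy[of u u' v v'] x y
      by (simp add: g_simp a_sym[of u' u] b_sym[of v' v] algebra_simps)
    show "(x, y) \<notin> (U \<times> V) \<times> (U \<times> V) \<Longrightarrow> g (x, y) = 0"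
    proof -
      assume "(x, y) \<notin> (U \<times> V) \<times> (U \<times> V)"
      then have "a (u, u') = 0 \<or> b (v, v') = 0" using x y a_out b_out by auto
      then show ?thesis using x y by (auto simp: g_simp)
    qed
  next
    have "(\<Sum>z\<in>(U \<times> V) \<times> (U \<times> V). g z) = (\<Sum>x\<in>U \<times> V. r x)"
      by (simp add: r_def deg_def sum_prod_split)
    also have "\<dots> = (\<Sum>u\<in>U. \<Sum>v\<in>V. r (u, v))" by (simp add: sum_prod_split)
    also have "\<dots> = (\<Sum>u\<in>U. p u)" by (simp add: marg1)
    also have "\<dots> = 1" by (rule sum_p)
    finally show "(\<Sum>z\<in>(U \<times> V) \<times> (U \<times> V). g z) = 1" .
  qed
  have wj: "weight_joining U a V b g"
    unfolding weight_joining_def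
  proof (intro conjI ballI)
    show "weight_fun (U \<times> V) g" by (rule wf)
  next
    fix u assume "u \<in> U" then show "(\<Sum>v\<in>V. deg (U \<times> V) g (u, v)) = p u" using marg1 by (simp add: r_def)
  next
    fix v assume "v \<in> V" then show "(\<Sum>u\<in>U. deg (U \<times> V) g (u, v)) = q v" using marg2 by (simp add: r_def)
  next
    fix u u' v
    show "p u * (\<Sum>v'\<in>V. g ((u, v), (u', v'))) = a (u, u') * deg (U \<times> V) g (u, v)"
      using r_eq[of u v] by (simp add: row1 r_def)
  next
    fix v v' u
    show "q v * (\<Sum>u'\<in>U. g ((u, v), (u', v'))) = b (v, v') * deg (U \<times> V) g (u, v)"
      using r_eq[of u v] by (simp add: row2 r_def)
  qed
  obtain u0 v0 where z0: "z0 = (u0, v0)" by (cases z0)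
  have "u0 \<in> U1" "v0 \<in> V1" using Zk nz z0 by (auto simp: Zw_def)
  then have pq: "p u0 > 0" "q v0 > 0" using p_pos q_pos by auto
  have U0: "u0 \<in> U" "v0 \<in> V" using \<open>u0 \<in> U1\<close> \<open>v0 \<in> V1\<close> by (auto simp: U1_def V1_def)
  have "r (u0, v0) \<noteq> p u0 * q v0"
  proof
    assume "r (u0, v0) = p u0 * q v0"
    then have "p u0 * q v0 * (eps * kap (u0, v0)) = 0" by (simp add: r_eq algebra_simps)
    then show False using pq eps0 nz z0 by simp
  qed
  then show ?thesis unfolding weakly_disjoint_def using wj U0 by (auto simp: r_def)
qed

end

lemma harm:
  fixes w :: "'x \<times> 'x \<Rightarrow> real" and d phi :: "'x \<Rightarrow> real"
  assumes A: "finite A" and nn: "\<And>z. w z \<ge> 0" and sy: "\<And>x y. w (x, y) = w (y, x)"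
    and out: "\<And>x y. x \<notin> A \<or> y \<notin> A \<Longrightarrow> w (x, y) = 0"
    and d: "\<And>x. d x = (\<Sum>y\<in>A. w (x, y))"
    and eig: "\<And>x. x \<in> A \<Longrightarrow> (\<Sum>y\<in>A. w (x, y) * phi y) = s * d x * phi x"
    and s2: "s * s = 1"
    and wne: "w (x0, y0) \<noteq> 0"
  shows "phi y0 = s * phi x0"
proof -
  have inner: "(\<Sum>y\<in>A. w (x, y) * (phi y - s * phi x)^2) =
      (\<Sum>y\<in>A. w (x, y) * (phi y)^2) - 2 * s * phi x * (\<Sum>y\<in>A. w (x, y) * phi y) + (phi x)^2 * d x" for x
  proof -
    have "(\<Sum>y\<in>A. w (x, y) * (phi y - s * phi x)^2) =
        (\<Sum>y\<in>A. w (x, y) * (phi y)^2 - 2 * s * phi x * (w (x, y) * phi y) + (phi x)^2 * w (x, y))"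
    proof (intro sum.cong refl)
      fix y
      have "(s * phi x)^2 = (phi x)^2" using s2 by (simp add: power2_eq_square algebra_simps)
      then show "w (x, y) * (phi y - s * phi x)^2 = w (x, y) * (phi y)^2 - 2 * s * phi x * (w (x, y) * phi y) + (phi x)^2 * w (x, y)"
        by (simp add: power2_diff algebra_simps)
    qed
    also have "\<dots> = (\<Sum>y\<in>A. w (x, y) * (phi y)^2) - 2 * s * phi x * (\<Sum>y\<in>A. w (x, y) * phi y) + (phi x)^2 * d x"
      by (simp add: sum.distrib sum_subtractf sum_distrib_left d)
    finally show ?thesis .
  qed
  have T1: "(\<Sum>x\<in>A. \<Sum>y\<in>A. w (x, y) * (phi y)^2) = (\<Sum>y\<in>A. d y * (phi y)^2)"
  proof -
    have "(\<Sum>x\<in>A. \<Sum>y\<in>A. w (x, y) * (phi y)^2) = (\<Sum>y\<in>A. \<Sum>x\<in>A. w (x, y) * (phi y)^2)"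
      by (rule sum.swap)
    also have "\<dots> = (\<Sum>y\<in>A. d y * (phi y)^2)"
      by (simp add: d sum_distrib_right sy)
    finally show ?thesis .
  qed
  have T2: "(\<Sum>x\<in>A. 2 * s * phi x * (\<Sum>y\<in>A. w (x, y) * phi y)) = 2 * (\<Sum>x\<in>A. d x * (phi x)^2)"
  proof -
    have "(\<Sum>x\<in>A. 2 * s * phi x * (\<Sum>y\<in>A. w (x, y) * phi y)) = (\<Sum>x\<in>A. 2 * (s * s) * (d x * (phi x)^2))"
    proof (intro sum.cong refl)
      fix x assume "x \<in> A"
      then have "2 * s * phi x * (\<Sum>y\<in>A. w (x, y) * phi y) = 2 * s * phi x * (s * d x * phi x)" by (simp only: eig)
      then show "2 * s * phi x * (\<Sum>y\<in>A. w (x, y) * phi y) = 2 * (s * s) * (d x * (phi x)^2)"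
        by (simp add: power2_eq_square algebra_simps)
    qed
    then show ?thesis using s2 by (simp add: sum_distrib_left)
  qed
  have tot: "(\<Sum>x\<in>A. \<Sum>y\<in>A. w (x, y) * (phi y - s * phi x)^2) = 0"
  proof -
    have "(\<Sum>x\<in>A. \<Sum>y\<in>A. w (x, y) * (phi y - s * phi x)^2) =
      (\<Sum>x\<in>A. \<Sum>y\<in>A. w (x, y) * (phi y)^2) - (\<Sum>x\<in>A. 2 * s * phi x * (\<Sum>y\<in>A. w (x, y) * phi y)) + (\<Sum>x\<in>A. (phi x)^2 * d x)"
      by (simp add: inner sum.distrib sum_subtractf)
    also have "\<dots> = 0" unfolding T1 T2 by (simp add: mult.commute)
    finally show ?thesis .
  qed
  have nn2: "\<And>x y. 0 \<le> w (x, y) * (phi y - s * phi x)^2" using nn by simp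
  have x0y0: "x0 \<in> A" "y0 \<in> A" using wne out by blast+
  have "(\<Sum>y\<in>A. w (x0, y) * (phi y - s * phi x0)^2) = 0"
    using tot sum_nonneg_eq_0_iff[OF A, of "\<lambda>x. \<Sum>y\<in>A. w (x, y) * (phi y - s * phi x)^2"] x0y0
    by (simp add: sum_nonneg nn2)
  then have "w (x0, y0) * (phi y0 - s * phi x0)^2 = 0"
    using sum_nonneg_eq_0_iff[OF A, of "\<lambda>y. w (x0, y) * (phi y - s * phi x0)^2"] x0y0 nn2 by simp
  then show ?thesis using wne by simp
qed

context wpair
begin

definition "Pop f = (\<lambda>(u, v). (\<Sum>u'\<in>U. a (u, u') * f (u', v)) / p u)"
definition "Qop f = (\<lambda>(u, v). (\<Sum>v'\<in>V. b (v, v') * f (u, v')) / q v)"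

lemma pP: "p u * Pop f (u, v) = (\<Sum>u'\<in>U. a (u, u') * f (u', v))"
proof (cases "p u = 0")
  case True then show ?thesis by (simp add: p0)
qed (simp add: Pop_def)

lemma qQ: "q v * Qop f (u, v) = (\<Sum>v'\<in>V. b (v, v') * f (u, v'))"
proof (cases "q v = 0")
  case True then show ?thesis by (simp add: q0)
qed (simp add: Qop_def)

lemma PQ:
  assumes Z: "Zw k" and S: "Sw k"
  shows "Pop k (u, v) = Qop k (u, v)"
proof (cases "u \<in> U1 \<and> v \<in> V1")
  case True
  then have uv: "u \<in> U" "v \<in> V" "p u > 0" "q v > 0" using p_pos q_pos by (auto simp: U1_def V1_def)
  have "q v * (\<Sum>u'\<in>U. a (u, u') * k (u', v)) = p u * (\<Sum>v'\<in>V. b (v, v') * k (u, v'))"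
    using S uv by (simp add: Sw_def)
  then show ?thesis using uv by (simp add: Pop_def Qop_def field_simps)
next
  case False
  then have "u \<notin> U1 \<or> v \<notin> V1" by blast
  then show ?thesis
  proof
    assume "u \<notin> U1"
    then have "p u = 0" by (simp add: p_zero_iff)
    moreover have "\<And>v'. k (u, v') = 0" using Z \<open>u \<notin> U1\<close> by (simp add: Zw_def)
    ultimately show ?thesis by (simp add: Pop_def Qop_def)
  next
    assume "v \<notin> V1"
    then have "q v = 0" by (simp add: q_zero_iff)
    moreover have "\<And>u'. k (u', v) = 0" using Z \<open>v \<notin> V1\<close> by (simp add: Zw_def)
    ultimately show ?thesis by (simp add: Pop_def Qop_def)
  qed
qed

lemma hb: assumes "Zw k" "Sw k" shows "(\<Sum>v'\<in>V. b (v, v') * k (u, v')) = q v * Pop k (u, v)"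
  by (simp add: PQ[OF assms] qQ)

lemma ha: "(\<Sum>u'\<in>U. a (u, u') * k (u', v)) = p u * Pop k (u, v)"
  by (simp add: pP)

lemma S_P:
  assumes Z: "Zw k" and S: "Sw k"
  shows "Zw (Pop k)" "Sw (Pop k)"
proof -
  show "Zw (Pop k)" unfolding Zw_def
  proof (intro allI impI)
    fix u v assume "u \<notin> U1 \<or> v \<notin> V1"
    then show "Pop k (u, v) = 0"
    proof
      assume "u \<notin> U1" then show ?thesis by (simp add: Pop_def p_zero_iff)
    next
      assume "v \<notin> V1"
      then have "q v = 0" by (simp add: q_zero_iff)
      then show ?thesis using PQ[OF Z S, of u v] by (simp add: Qop_def)
    qed
  qed
  have E1: "q v * (\<Sum>u'\<in>U. a (u, u') * Pop k (u', v)) = p u * (\<Sum>v'\<in>V. b (v, v') * Pop k (u, v'))" for u v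
  proof -
    have "q v * (\<Sum>u'\<in>U. a (u, u') * Pop k (u', v)) = (\<Sum>u'\<in>U. a (u, u') * (q v * Pop k (u', v)))"
      by (simp add: sum_distrib_left algebra_simps)
    also have "\<dots> = (\<Sum>u'\<in>U. a (u, u') * (\<Sum>v'\<in>V. b (v, v') * k (u', v')))"
      by (simp add: hb[OF Z S])
    also have "\<dots> = (\<Sum>v'\<in>V. b (v, v') * (\<Sum>u'\<in>U. a (u, u') * k (u', v')))"
      by (simp add: sum_distrib_left algebra_simps) (rule sum.swap)
    also have "\<dots> = (\<Sum>v'\<in>V. b (v, v') * (p u * Pop k (u, v')))"
      by (simp add: ha)
    also have "\<dots> = p u * (\<Sum>v'\<in>V. b (v, v') * Pop k (u, v'))"
      by (simp add: sum_distrib_left algebra_simps)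
    finally show ?thesis .
  qed
  have E2: "(\<Sum>v\<in>V. q v * Pop k (u, v)) = 0" if "u \<in> U" for u
  proof -
    have "(\<Sum>v\<in>V. q v * Pop k (u, v)) = (\<Sum>v\<in>V. \<Sum>v'\<in>V. b (v, v') * k (u, v'))"
      by (simp add: hb[OF Z S])
    also have "\<dots> = (\<Sum>v'\<in>V. (\<Sum>v\<in>V. b (v, v')) * k (u, v'))"
      by (subst sum.swap) (simp add: sum_distrib_right)
    also have "\<dots> = (\<Sum>v'\<in>V. q v' * k (u, v'))" by (simp add: colsum_b)
    also have "\<dots> = 0" using S that by (simp add: Sw_def)
    finally show ?thesis .
  qed
  have E3: "(\<Sum>u\<in>U. p u * Pop k (u, v)) = 0" if "v \<in> V" for v
  proof -
    have "(\<Sum>u\<in>U. p u * Pop k (u, v)) = (\<Sum>u\<in>U. \<Sum>u'\<in>U. a (u, u') * k (u', v))"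
      by (simp add: ha)
    also have "\<dots> = (\<Sum>u'\<in>U. (\<Sum>u\<in>U. a (u, u')) * k (u', v))"
      by (subst sum.swap) (simp add: sum_distrib_right)
    also have "\<dots> = (\<Sum>u'\<in>U. p u' * k (u', v))" by (simp add: colsum_a)
    also have "\<dots> = 0" using S that by (simp add: Sw_def)
    finally show ?thesis .
  qed
  show "Sw (Pop k)" unfolding Sw_def using E1 E2 E3 by blast
qed

lemma Pop_add: "Pop (\<lambda>z. f z + g z) z = Pop f z + Pop g z"
  by (cases z) (simp add: Pop_def sum.distrib algebra_simps add_divide_distrib)
lemma Pop_diff: "Pop (\<lambda>z. f z - g z) z = Pop f z - Pop g z"
  by (cases z) (simp add: Pop_def sum_subtractf algebra_simps diff_divide_distrib)

lemma S_add: "Zw f \<Longrightarrow> Sw f \<Longrightarrow> Zw g \<Longrightarrow> Sw g \<Longrightarrow> Zw (\<lambda>z. f z + g z) \<and> Sw (\<lambda>z. f z + g z)"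
  by (simp add: Zw_def Sw_def sum.distrib algebra_simps)
lemma S_diff: "Zw f \<Longrightarrow> Sw f \<Longrightarrow> Zw g \<Longrightarrow> Sw g \<Longrightarrow> Zw (\<lambda>z. f z - g z) \<and> Sw (\<lambda>z. f z - g z)"
  by (simp add: Zw_def Sw_def sum_subtractf algebra_simps)

lemma constrA:
  assumes Z: "Zw k" and S: "Sw k" and nz: "Pop (Pop k) z1 \<noteq> k z1"
  shows "\<not> weakly_disjoint U a V b"
proof -
  define m where "m = Pop k"
  define n where "n = Pop m"
  have Zm: "Zw m" and Sm: "Sw m" using S_P[OF Z S] by (simp_all add: m_def)
  have Zn: "Zw n" and Sn: "Sw n" using S_P[OF Zm Sm] by (simp_all add: n_def)
  define kap where "kap = (\<lambda>z. k z - n z)"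
  have Zk: "Zw kap" and Sk: "Sw kap" using S_diff[OF Z S Zn Sn] by (simp_all add: kap_def)
  define c where "c = (\<lambda>z::('u \<times> 'v) \<times> ('u \<times> 'v). k (fst z) + k (snd z) - m (fst (fst z), snd (snd z)) - m (fst (snd z), snd (fst z)))"
  have c_simp: "c ((u, v), (u', v')) = k (u, v) + k (u', v') - m (u, v') - m (u', v)" for u v u' v'
    by (simp add: c_def)
  show ?thesis
  proof (rule builder[OF Zk Sk])
    fix u u' v assume uv: "u \<in> U" "u' \<in> U" "v \<in> V"
    have "(\<Sum>v'\<in>V. b (v, v') * c ((u, v), (u', v'))) =
       (\<Sum>v'\<in>V. b (v, v') * k (u, v) + b (v, v') * k (u', v') - b (v, v') * m (u, v') - b (v, v') * m (u', v))"
      by (intro sum.cong refl) (simp add: c_simp algebra_simps)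
    also have "\<dots> = (\<Sum>v'\<in>V. b (v, v') * k (u, v)) + (\<Sum>v'\<in>V. b (v, v') * k (u', v')) - (\<Sum>v'\<in>V. b (v, v') * m (u, v')) - (\<Sum>v'\<in>V. b (v, v') * m (u', v))"
      by (simp add: sum.distrib sum_subtractf)
    also have "\<dots> = q v * k (u, v) + q v * m (u', v) - q v * n (u, v) - q v * m (u', v)"
    proof -
      have s1: "(\<Sum>v'\<in>V. b (v, v') * k (u, v)) = q v * k (u, v)" by (simp add: q_def' sum_distrib_right)
      have s2: "(\<Sum>v'\<in>V. b (v, v') * k (u', v')) = q v * m (u', v)" using hb[OF Z S] by (simp add: m_def)
      have s3: "(\<Sum>v'\<in>V. b (v, v') * m (u, v')) = q v * n (u, v)" using hb[OF Zm Sm] by (simp add: n_def)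
      have s4: "(\<Sum>v'\<in>V. b (v, v') * m (u', v)) = q v * m (u', v)" by (simp add: q_def' sum_distrib_right)
      show ?thesis unfolding s1 s2 s3 s4 ..
    qed
    also have "\<dots> = q v * kap (u, v)" by (simp add: kap_def algebra_simps)
    finally show "(\<Sum>v'\<in>V. b (v, v') * c ((u, v), (u', v'))) = q v * kap (u, v)" .
  next
    fix u v v' assume uv: "u \<in> U" "v \<in> V" "v' \<in> V"
    have "(\<Sum>u'\<in>U. a (u, u') * c ((u, v), (u', v'))) =
       (\<Sum>u'\<in>U. a (u, u') * k (u, v) + a (u, u') * k (u', v') - a (u, u') * m (u, v') - a (u, u') * m (u', v))"
      by (intro sum.cong refl) (simp add: c_simp algebra_simps)
    also have "\<dots> = (\<Sum>u'\<in>U. a (u, u') * k (u, v)) + (\<Sum>u'\<in>U. a (u, u') * k (u', v')) - (\<Sum>u'\<in>U. a (u, u') * m (u, v')) - (\<Sum>u'\<in>U. a (u, u') * m (u', v))"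
      by (simp add: sum.distrib sum_subtractf)
    also have "\<dots> = p u * k (u, v) + p u * m (u, v') - p u * m (u, v') - p u * n (u, v)"
    proof -
      have s1: "(\<Sum>u'\<in>U. a (u, u') * k (u, v)) = p u * k (u, v)" by (simp add: p_def' sum_distrib_right)
      have s2: "(\<Sum>u'\<in>U. a (u, u') * k (u', v')) = p u * m (u, v')" using ha by (simp add: m_def)
      have s3: "(\<Sum>u'\<in>U. a (u, u') * m (u, v')) = p u * m (u, v')" by (simp add: p_def' sum_distrib_right)
      have s4: "(\<Sum>u'\<in>U. a (u, u') * m (u', v)) = p u * n (u, v)" using ha by (simp add: n_def)
      show ?thesis unfolding s1 s2 s3 s4 ..
    qed
    also have "\<dots> = p u * kap (u, v)" by (simp add: kap_def algebra_simps)
    finally show "(\<Sum>u'\<in>U. a (u, u') * c ((u, v), (u', v'))) = p u * kap (u, v)" .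
  next
    fix u u' v v'
    show "a (u, u') * b (v, v') * c ((u, v), (u', v')) = a (u, u') * b (v, v') * c ((u', v'), (u, v))"
      by (simp add: c_simp algebra_simps)
  next
    show "kap z1 \<noteq> 0" using nz by (simp add: kap_def n_def m_def)
  qed
qed

lemma constrB:
  assumes Z: "Zw j" and S: "Sw j" and s2: "s * s = 1" and eig: "\<And>z. Pop j z = s * j z" and nz: "j z1 \<noteq> 0"
  shows "\<not> weakly_disjoint U a V b"
proof -
  have ha_harm: "j (u', v) = s * j (u, v)" if "a (u, u') \<noteq> 0" for u u' v
  proof (rule harm[where w = a and A = U and d = p and phi = "\<lambda>x. j (x, v)", OF finU a_nn a_sym a_out p_def' _ s2 that])
    fix x assume "x \<in> U"
    show "(\<Sum>y\<in>U. a (x, y) * j (y, v)) = s * p x * j (x, v)" using ha[of x j v] eig[of "(x, v)"] by simp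
  qed
  have hb_harm: "j (u, v') = s * j (u, v)" if "b (v, v') \<noteq> 0" for u v v'
  proof (rule harm[where w = b and A = V and d = q and phi = "\<lambda>y. j (u, y)", OF finV b_nn b_sym b_out q_def' _ s2 that])
    fix y assume "y \<in> V"
    show "(\<Sum>x\<in>V. b (y, x) * j (u, x)) = s * q y * j (u, y)" using hb[OF Z S, of y u] eig[of "(u, y)"] by simp
  qed
  define c where "c = (\<lambda>z::('u \<times> 'v) \<times> ('u \<times> 'v). j (fst z))"
  show ?thesis
  proof (rule builder[OF Z S, where c = c])
    fix u u' v show "(\<Sum>v'\<in>V. b (v, v') * c ((u, v), (u', v'))) = q v * j (u, v)"
      by (simp add: c_def q_def' sum_distrib_right)
  next
    fix u v v' show "(\<Sum>u'\<in>U. a (u, u') * c ((u, v), (u', v'))) = p u * j (u, v)"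
      by (simp add: c_def p_def' sum_distrib_right)
  next
    fix u u' v v'
    show "a (u, u') * b (v, v') * c ((u, v), (u', v')) = a (u, u') * b (v, v') * c ((u', v'), (u, v))"
    proof (cases "a (u, u') = 0 \<or> b (v, v') = 0")
      case False
      then have "j (u', v) = s * j (u, v)" "j (u', v') = s * j (u', v)"
        using ha_harm hb_harm by auto
      then have "j (u', v') = (s * s) * j (u, v)" by simp
      then show ?thesis using s2 by (simp add: c_def)
    qed auto
  next
    show "j z1 \<noteq> 0" by (rule nz)
  qed
qed

lemma W2:
  assumes Z: "Zw k0" and S: "Sw k0" and nz: "k0 z0 \<noteq> 0"
  shows "\<not> weakly_disjoint U a V b"
proof (cases "\<exists>k z1. Zw k \<and> Sw k \<and> Pop (Pop k) z1 \<noteq> k z1")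
  case True
  then obtain k z1 where "Zw k" "Sw k" "Pop (Pop k) z1 \<noteq> k z1" by blast
  then show ?thesis by (rule constrA)
next
  case False
  then have inv: "\<And>z. Pop (Pop k0) z = k0 z" using Z S by blast
  have ZP: "Zw (Pop k0)" and SP: "Sw (Pop k0)" using S_P[OF Z S] by auto
  define j1 where "j1 = (\<lambda>z. k0 z + Pop k0 z)"
  define j2 where "j2 = (\<lambda>z. k0 z - Pop k0 z)"
  have S1: "Zw j1" "Sw j1" using S_add[OF Z S ZP SP] by (simp_all add: j1_def)
  have S2: "Zw j2" "Sw j2" using S_diff[OF Z S ZP SP] by (simp_all add: j2_def)
  have e1: "Pop j1 z = 1 * j1 z" for z unfolding j1_def using Pop_add[of k0 "Pop k0" z] inv[of z] by simp
  have e2: "Pop j2 z = (-1) * j2 z" for z unfolding j2_def using Pop_diff[of k0 "Pop k0" z] inv[of z] by simp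
  have "j1 z0 + j2 z0 = 2 * k0 z0" by (simp add: j1_def j2_def)
  then have "j1 z0 \<noteq> 0 \<or> j2 z0 \<noteq> 0" using nz by auto
  then show ?thesis
  proof
    assume "j1 z0 \<noteq> 0" then show ?thesis using constrB[OF S1 _ e1] by simp
  next
    assume "j2 z0 \<noteq> 0" then show ?thesis using constrB[OF S2 _ e2] by simp
  qed
qed

end

context wpair
begin

lemma W1:
  assumes wj: "weight_joining U a V b g" and u0: "u0 \<in> U" and v0: "v0 \<in> V"
    and ne: "deg (U \<times> V) g (u0, v0) \<noteq> p u0 * q v0"
  shows "\<exists>k z. Zw k \<and> Sw k \<and> k z \<noteq> 0"
proof -
  define r where "r x = deg (U \<times> V) g x" for x
  have wf: "weight_fun (U \<times> V) g" using wj by (simp add: weight_joining_def)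
  have g_nn: "g z \<ge> 0" for z using wf by (cases z) (auto simp: weight_fun_def)
  have g_sym: "g (x, y) = g (y, x)" for x y using wf by (cases x, cases y) (auto simp: weight_fun_def)
  have m1: "\<And>u. u \<in> U \<Longrightarrow> (\<Sum>v\<in>V. r (u, v)) = p u" using wj by (simp add: weight_joining_def r_def)
  have m2: "\<And>v. v \<in> V \<Longrightarrow> (\<Sum>u\<in>U. r (u, v)) = q v" using wj by (simp add: weight_joining_def r_def)
  have c4: "\<And>u u' v. u \<in> U \<Longrightarrow> u' \<in> U \<Longrightarrow> v \<in> V \<Longrightarrow> p u * (\<Sum>v'\<in>V. g ((u, v), (u', v'))) = a (u, u') * r (u, v)"
    using wj by (simp add: weight_joining_def r_def)
  have c5: "\<And>v v' u. v \<in> V \<Longrightarrow> v' \<in> V \<Longrightarrow> u \<in> U \<Longrightarrow> q v * (\<Sum>u'\<in>U. g ((u, v), (u', v'))) = b (v, v') * r (u, v)"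
    using wj by (simp add: weight_joining_def r_def)
  have r_nn: "r x \<ge> 0" for x unfolding r_def deg_def by (intro sum_nonneg) (simp add: g_nn)
  have g_le: "g (x, y) \<le> r x" if "y \<in> U \<times> V" for x y
    unfolding r_def deg_def using that finU finV g_nn by (intro member_le_sum) auto
  have r_le_p: "r (u, v) \<le> p u" if "u \<in> U" "v \<in> V" for u v
    using m1[OF that(1)] that finV r_nn member_le_sum[of v V "\<lambda>v. r (u, v)"] by auto
  have r_le_q: "r (u, v) \<le> q v" if "u \<in> U" "v \<in> V" for u v
    using m2[OF that(2)] that finU r_nn member_le_sum[of u U "\<lambda>u. r (u, v)"] by auto
  have rp0: "r (u, v) = 0" if "u \<in> U" "v \<in> V" "p u = 0" for u v
    using r_le_p[OF that(1,2)] r_nn[of "(u, v)"] that(3) by linarith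
  have rq0: "r (u, v) = 0" if "u \<in> U" "v \<in> V" "q v = 0" for u v
    using r_le_q[OF that(1,2)] r_nn[of "(u, v)"] that(3) by linarith
  define k where "k z = (if fst z \<in> U1 \<and> snd z \<in> V1 then r z / (p (fst z) * q (snd z)) - 1 else 0)" for z
  have kval: "k (u, v) = (if u \<in> U1 \<and> v \<in> V1 then r (u, v) / (p u * q v) - 1 else 0)" for u v
    by (simp add: k_def)
  have Zk: "Zw k" by (auto simp: Zw_def kval)
  have U1U: "U1 \<subseteq> U" and V1V: "V1 \<subseteq> V" by (auto simp: U1_def V1_def)
  have KA: "(\<Sum>u'\<in>U. a (u, u') * r (u', v) / p u') = (\<Sum>u'\<in>U. \<Sum>v'\<in>V. g ((u, v'), (u', v)))"
    if "u \<in> U" "v \<in> V" for u v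
  proof (intro sum.cong refl)
    fix u' assume u': "u' \<in> U"
    show "a (u, u') * r (u', v) / p u' = (\<Sum>v'\<in>V. g ((u, v'), (u', v)))"
    proof (cases "p u' = 0")
      case True
      have "g ((u, v'), (u', v)) = 0" if "v' \<in> V" for v'
      proof -
        have "g ((u', v), (u, v')) \<le> r (u', v)" using g_le \<open>u \<in> U\<close> that by auto
        then show ?thesis using rp0[OF u' \<open>v \<in> V\<close> True] g_nn[of "((u, v'), (u', v))"] g_sym by (metis antisym)
      qed
      then show ?thesis using True by simp
    next
      case False
      have "p u' * (\<Sum>v'\<in>V. g ((u', v), (u, v'))) = a (u', u) * r (u', v)" by (rule c4[OF u' \<open>u \<in> U\<close> \<open>v \<in> V\<close>])
      then show ?thesis using False by (simp add: field_simps g_sym a_sym)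
    qed
  qed
  have KB: "(\<Sum>v'\<in>V. b (v, v') * r (u, v') / q v') = (\<Sum>v'\<in>V. \<Sum>u'\<in>U. g ((u, v'), (u', v)))"
    if "u \<in> U" "v \<in> V" for u v
  proof (intro sum.cong refl)
    fix v' assume v': "v' \<in> V"
    show "b (v, v') * r (u, v') / q v' = (\<Sum>u'\<in>U. g ((u, v'), (u', v)))"
    proof (cases "q v' = 0")
      case True
      have "g ((u, v'), (u', v)) = 0" if "u' \<in> U" for u'
      proof -
        have "g ((u, v'), (u', v)) \<le> r (u, v')" using g_le \<open>v \<in> V\<close> that by auto
        then show ?thesis using rq0[OF \<open>u \<in> U\<close> v' True] g_nn[of "((u, v'), (u', v))"] by linarith
      qed
      then show ?thesis using True by simp
    next
      case False
      have "q v' * (\<Sum>u'\<in>U. g ((u, v'), (u', v))) = b (v', v) * r (u, v')" by (rule c5[OF v' \<open>v \<in> V\<close> \<open>u \<in> U\<close>])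
      then show ?thesis using False by (simp add: field_simps b_sym)
    qed
  qed
  have KAB: "(\<Sum>u'\<in>U. a (u, u') * r (u', v) / p u') = (\<Sum>v'\<in>V. b (v, v') * r (u, v') / q v')"
    if "u \<in> U" "v \<in> V" for u v
    using KA[OF that] KB[OF that] sum.swap[where g="\<lambda>u' v'. g ((u, v'), (u', v))" and A=U and B=V] by simp
  have E1: "q v * (\<Sum>u'\<in>U. a (u, u') * k (u', v)) = p u * (\<Sum>v'\<in>V. b (v, v') * k (u, v'))"
    if uv: "u \<in> U" "v \<in> V" for u v
  proof (cases "u \<in> U1 \<and> v \<in> V1")
    case False
    then have "p u = 0 \<or> q v = 0" by (simp add: p_zero_iff q_zero_iff)
    then show ?thesis by (auto simp: p0 q0)
  next
    case True
    then have pq: "p u > 0" "q v > 0" using p_pos q_pos by auto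
    have uU1: "u \<in> U1" "v \<in> V1" using True by auto
    have L: "q v * (\<Sum>u'\<in>U. a (u, u') * k (u', v)) = (\<Sum>u'\<in>U. a (u, u') * r (u', v) / p u') - q v * p u"
    proof -
      have "q v * (\<Sum>u'\<in>U. a (u, u') * k (u', v)) = (\<Sum>u'\<in>U. a (u, u') * r (u', v) / p u' - q v * a (u, u'))"
        unfolding sum_distrib_left
      proof (intro sum.cong refl)
        fix u' assume u': "u' \<in> U"
        show "q v * (a (u, u') * k (u', v)) = a (u, u') * r (u', v) / p u' - q v * a (u, u')"
        proof (cases "u' \<in> U1")
          case True
          then have "p u' > 0" using p_pos by simp
          then show ?thesis using True uU1 pq by (simp add: kval field_simps)
        next
          case False
          then have "p u' = 0" by (simp add: p_zero_iff)
          then have "a (u, u') = 0" using p0 a_sym by metis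
          then show ?thesis by simp
        qed
      qed
      also have "\<dots> = (\<Sum>u'\<in>U. a (u, u') * r (u', v) / p u') - q v * p u"
        by (simp add: sum_subtractf sum_distrib_left p_def')
      finally show ?thesis .
    qed
    have R: "p u * (\<Sum>v'\<in>V. b (v, v') * k (u, v')) = (\<Sum>v'\<in>V. b (v, v') * r (u, v') / q v') - p u * q v"
    proof -
      have "p u * (\<Sum>v'\<in>V. b (v, v') * k (u, v')) = (\<Sum>v'\<in>V. b (v, v') * r (u, v') / q v' - p u * b (v, v'))"
        unfolding sum_distrib_left
      proof (intro sum.cong refl)
        fix v' assume v': "v' \<in> V"
        show "p u * (b (v, v') * k (u, v')) = b (v, v') * r (u, v') / q v' - p u * b (v, v')"
        proof (cases "v' \<in> V1")
          case True
          then have "q v' > 0" using q_pos by simp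
          then show ?thesis using True uU1 pq by (simp add: kval field_simps)
        next
          case False
          then have "q v' = 0" by (simp add: q_zero_iff)
          then have "b (v, v') = 0" using q0 b_sym by metis
          then show ?thesis by simp
        qed
      qed
      also have "\<dots> = (\<Sum>v'\<in>V. b (v, v') * r (u, v') / q v') - p u * q v"
        by (simp add: sum_subtractf sum_distrib_left q_def')
      finally show ?thesis .
    qed
    show ?thesis using L R KAB[OF uv] by simp
  qed
  have E2: "(\<Sum>v\<in>V. q v * k (u, v)) = 0" if u: "u \<in> U" for u
  proof (cases "u \<in> U1")
    case False then show ?thesis by (simp add: kval)
  next
    case True
    then have pu: "p u > 0" using p_pos by simp
    have "(\<Sum>v\<in>V. q v * k (u, v)) = (\<Sum>v\<in>V. r (u, v) / p u - q v)"
    proof (intro sum.cong refl)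
      fix v assume v: "v \<in> V"
      show "q v * k (u, v) = r (u, v) / p u - q v"
      proof (cases "v \<in> V1")
        case True
        then have "q v > 0" using q_pos by simp
        then show ?thesis using True \<open>u \<in> U1\<close> pu by (simp add: kval field_simps)
      next
        case False
        then have "q v = 0" by (simp add: q_zero_iff)
        then show ?thesis using rq0[OF u v] by (simp add: kval)
      qed
    qed
    also have "\<dots> = (\<Sum>v\<in>V. r (u, v)) / p u - (\<Sum>v\<in>V. q v)"
      by (simp add: sum_subtractf sum_divide_distrib)
    also have "\<dots> = 0" using m1[OF u] pu sum_q by simp
    finally show ?thesis .
  qed
  have E3: "(\<Sum>u\<in>U. p u * k (u, v)) = 0" if v: "v \<in> V" for v
  proof (cases "v \<in> V1")
    case False then show ?thesis by (simp add: kval)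
  next
    case True
    then have qv: "q v > 0" using q_pos by simp
    have "(\<Sum>u\<in>U. p u * k (u, v)) = (\<Sum>u\<in>U. r (u, v) / q v - p u)"
    proof (intro sum.cong refl)
      fix u assume u: "u \<in> U"
      show "p u * k (u, v) = r (u, v) / q v - p u"
      proof (cases "u \<in> U1")
        case True
        then have "p u > 0" using p_pos by simp
        then show ?thesis using True \<open>v \<in> V1\<close> qv by (simp add: kval field_simps)
      next
        case False
        then have "p u = 0" by (simp add: p_zero_iff)
        then show ?thesis using rp0[OF u v] by (simp add: kval)
      qed
    qed
    also have "\<dots> = (\<Sum>u\<in>U. r (u, v)) / q v - (\<Sum>u\<in>U. p u)"
      by (simp add: sum_subtractf sum_divide_distrib)
    also have "\<dots> = 0" using m2[OF v] qv sum_p by simp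
    finally show ?thesis .
  qed
  have Sk: "Sw k" unfolding Sw_def using E1 E2 E3 by blast
  have "u0 \<in> U1"
  proof (rule ccontr)
    assume "u0 \<notin> U1"
    then have "p u0 = 0" by (simp add: p_zero_iff)
    then show False using rp0[OF u0 v0] ne by (simp add: r_def)
  qed
  moreover have "v0 \<in> V1"
  proof (rule ccontr)
    assume "v0 \<notin> V1"
    then have "q v0 = 0" by (simp add: q_zero_iff)
    then show False using rq0[OF u0 v0] ne by (simp add: r_def)
  qed
  ultimately have "k (u0, v0) \<noteq> 0"
    using ne p_pos q_pos by (simp add: kval r_def field_simps)
  then show ?thesis using Zk Sk by blast
qed

theorem weak_char: "weakly_disjoint U a V b \<longleftrightarrow> (\<forall>k. Zw k \<and> Sw k \<longrightarrow> (\<forall>z. k z = 0))"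
proof
  assume wd: "weakly_disjoint U a V b"
  show "\<forall>k. Zw k \<and> Sw k \<longrightarrow> (\<forall>z. k z = 0)"
  proof (intro allI impI)
    fix k z assume "Zw k \<and> Sw k"
    then show "k z = 0" using W2[of k z] wd by auto
  qed
next
  assume H: "\<forall>k. Zw k \<and> Sw k \<longrightarrow> (\<forall>z. k z = 0)"
  show "weakly_disjoint U a V b"
    unfolding weakly_disjoint_def
  proof (intro allI impI ballI)
    fix g u v assume "weight_joining U a V b g" "u \<in> U" "v \<in> V"
    then show "deg (U \<times> V) g (u, v) = p u * q v" using W1 H by blast
  qed
qed

end

context wpair
begin

definition "Xs = {z. (fst (fst z), fst (snd z)) \<in> E \<and> (snd (fst z), snd (snd z)) \<in> F}"

definition "Zs h \<longleftrightarrow> (\<forall>z. z \<notin> Xs \<longrightarrow> h z = 0)"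

lemma ZsD: "Zs h \<Longrightarrow> z \<notin> Xs \<Longrightarrow> h z = 0" unfolding Zs_def by blast

definition "Ss h \<longleftrightarrow>
   (\<forall>x\<in>U \<times> V. \<forall>y\<in>U \<times> V. h (x, y) - h (y, x) = 0) \<and>
   (\<forall>u\<in>U. (\<Sum>v\<in>V. deg (U \<times> V) h (u, v)) = 0) \<and>
   (\<forall>v\<in>V. (\<Sum>u\<in>U. deg (U \<times> V) h (u, v)) = 0) \<and>
   (\<forall>u\<in>U. \<forall>u'\<in>U. \<forall>v\<in>V. p u * (\<Sum>v'\<in>V. h ((u, v), (u', v'))) - a (u, u') * deg (U \<times> V) h (u, v) = 0) \<and>
   (\<forall>v\<in>V. \<forall>v'\<in>V. \<forall>u\<in>U. q v * (\<Sum>u'\<in>U. h ((u, v), (u', v'))) - b (v, v') * deg (U \<times> V) h (u, v) = 0)"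

lemma SsD1: "Ss h \<Longrightarrow> x \<in> U \<times> V \<Longrightarrow> y \<in> U \<times> V \<Longrightarrow> h (x, y) - h (y, x) = 0"
  unfolding Ss_def by blast

lemma SsD2: "Ss h \<Longrightarrow> u \<in> U \<Longrightarrow> (\<Sum>v\<in>V. deg (U \<times> V) h (u, v)) = 0"
  unfolding Ss_def by blast
lemma SsD3: "Ss h \<Longrightarrow> v \<in> V \<Longrightarrow> (\<Sum>u\<in>U. deg (U \<times> V) h (u, v)) = 0"
  unfolding Ss_def by blast
lemma SsD4: "Ss h \<Longrightarrow> u \<in> U \<Longrightarrow> u' \<in> U \<Longrightarrow> v \<in> V \<Longrightarrow>
   p u * (\<Sum>v'\<in>V. h ((u, v), (u', v'))) = a (u, u') * deg (U \<times> V) h (u, v)"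
  unfolding Ss_def by (metis eq_iff_diff_eq_0)
lemma SsD5: "Ss h \<Longrightarrow> v \<in> V \<Longrightarrow> v' \<in> V \<Longrightarrow> u \<in> U \<Longrightarrow>
   q v * (\<Sum>u'\<in>U. h ((u, v), (u', v'))) = b (v, v') * deg (U \<times> V) h (u, v)"
  unfolding Ss_def by (metis eq_iff_diff_eq_0)

definition "ab z = a (fst (fst z), fst (snd z)) * b (snd (fst z), snd (snd z))"

lemma ab_simp: "ab ((u, v), (u', v')) = a (u, u') * b (v, v')" by (simp add: ab_def)

lemma a0E: "(u, u') \<notin> E \<Longrightarrow> a (u, u') = 0"
  using a_E[of "(u, u')"] a_nn[of "(u, u')"] by linarith
lemma b0F: "(v, v') \<notin> F \<Longrightarrow> b (v, v') = 0"
  using b_F[of "(v, v')"] b_nn[of "(v, v')"] by linarith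

lemma Xs_sub: "Xs \<subseteq> (U \<times> V) \<times> (U \<times> V)" using EU FV by (auto simp: Xs_def)
lemma fin_Xs: "finite Xs" using finite_subset[OF Xs_sub] finU finV by auto

lemma ab_row: "(\<Sum>v'\<in>V. ab ((u, v), (u', v'))) = a (u, u') * q v"
  by (simp add: ab_simp q_def' sum_distrib_left)
lemma ab_col: "(\<Sum>u'\<in>U. ab ((u, v), (u', v'))) = b (v, v') * p u"
  by (simp add: ab_simp p_def' sum_distrib_left mult.commute)
lemma ab_deg: "deg (U \<times> V) ab (u, v) = p u * q v"
  by (simp add: deg_def sum_prod_split ab_row p_def' sum_distrib_right)

lemma ab_pos: "z \<in> Xs \<Longrightarrow> ab z > 0"
  using a_E b_F by (auto simp: Xs_def ab_def)

lemma ab_zero: "z \<notin> Xs \<Longrightarrow> ab z = 0"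
  by (cases z) (auto simp: Xs_def ab_def a0E b0F)

lemma strong_support:
  assumes wj: "weight_joining U a V b g" and nX: "z \<notin> Xs"
  shows "g z = 0"
proof -
  have wf: "weight_fun (U \<times> V) g" using wj by (simp add: weight_joining_def)
  have g_nn: "g z \<ge> 0" for z using wf by (cases z) (auto simp: weight_fun_def)
  have g_out: "g (x, y) = 0" if "(x, y) \<notin> (U \<times> V) \<times> (U \<times> V)" for x y using wf that unfolding weight_fun_def by blast
  have m1: "\<And>u. u \<in> U \<Longrightarrow> (\<Sum>v\<in>V. deg (U \<times> V) g (u, v)) = p u" using wj by (simp add: weight_joining_def)
  have m2: "\<And>v. v \<in> V \<Longrightarrow> (\<Sum>u\<in>U. deg (U \<times> V) g (u, v)) = q v" using wj by (simp add: weight_joining_def)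
  have c4: "\<And>u u' v. u \<in> U \<Longrightarrow> u' \<in> U \<Longrightarrow> v \<in> V \<Longrightarrow> p u * (\<Sum>v'\<in>V. g ((u, v), (u', v'))) = a (u, u') * deg (U \<times> V) g (u, v)"
    using wj by (simp add: weight_joining_def)
  have c5: "\<And>v v' u. v \<in> V \<Longrightarrow> v' \<in> V \<Longrightarrow> u \<in> U \<Longrightarrow> q v * (\<Sum>u'\<in>U. g ((u, v), (u', v'))) = b (v, v') * deg (U \<times> V) g (u, v)"
    using wj by (simp add: weight_joining_def)
  have r_nn: "deg (U \<times> V) g x \<ge> 0" for x unfolding deg_def by (intro sum_nonneg) (simp add: g_nn)
  have g_le: "g (x, y) \<le> deg (U \<times> V) g x" if "y \<in> U \<times> V" for x y
    unfolding deg_def using that finU finV g_nn by (intro member_le_sum) auto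
  have r_le_p: "deg (U \<times> V) g (u, v) \<le> p u" if "u \<in> U" "v \<in> V" for u v
    using m1[OF that(1)] that finV r_nn member_le_sum[of v V "\<lambda>v. deg (U \<times> V) g (u, v)"] by auto
  have r_le_q: "deg (U \<times> V) g (u, v) \<le> q v" if "u \<in> U" "v \<in> V" for u v
    using m2[OF that(2)] that finU r_nn member_le_sum[of u U "\<lambda>u. deg (U \<times> V) g (u, v)"] by auto
  obtain u v u' v' where z: "z = ((u, v), (u', v'))" by (metis prod.collapse)
  show ?thesis
  proof (cases "z \<in> (U \<times> V) \<times> (U \<times> V)")
    case False then show ?thesis using g_out z by auto
  next
    case True
    then have in4: "u \<in> U" "v \<in> V" "u' \<in> U" "v' \<in> V" using z by auto
    have "(u, u') \<notin> E \<or> (v, v') \<notin> F" using nX z by (auto simp: Xs_def)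
    then show ?thesis
    proof
      assume "(u, u') \<notin> E"
      then have "a (u, u') = 0" by (rule a0E)
      then have "p u * (\<Sum>v'\<in>V. g ((u, v), (u', v'))) = 0" using c4[OF in4(1,3,2)] by simp
      then have "p u = 0 \<or> (\<Sum>v'\<in>V. g ((u, v), (u', v'))) = 0" by simp
      then show ?thesis
      proof
        assume "p u = 0"
        then have "deg (U \<times> V) g (u, v) = 0" using r_le_p[OF in4(1,2)] r_nn[of "(u, v)"] by linarith
        then show ?thesis using g_le[of "(u', v')" "(u, v)"] g_nn[of z] in4 z by auto
      next
        assume "(\<Sum>v'\<in>V. g ((u, v), (u', v'))) = 0"
        then show ?thesis using sum_nonneg_eq_0_iff[OF finV, of "\<lambda>v'. g ((u, v), (u', v'))"] g_nn in4 z by auto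
      qed
    next
      assume "(v, v') \<notin> F"
      then have "b (v, v') = 0" by (rule b0F)
      then have "q v * (\<Sum>u'\<in>U. g ((u, v), (u', v'))) = 0" using c5[OF in4(2,4,1)] by simp
      then have "q v = 0 \<or> (\<Sum>u'\<in>U. g ((u, v), (u', v'))) = 0" by simp
      then show ?thesis
      proof
        assume "q v = 0"
        then have "deg (U \<times> V) g (u, v) = 0" using r_le_q[OF in4(1,2)] r_nn[of "(u, v)"] by linarith
        then show ?thesis using g_le[of "(u', v')" "(u, v)"] g_nn[of z] in4 z by auto
      next
        assume "(\<Sum>u'\<in>U. g ((u, v), (u', v'))) = 0"
        then show ?thesis using sum_nonneg_eq_0_iff[OF finU, of "\<lambda>u'. g ((u, v), (u', v'))"] g_nn in4 z by auto
      qed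
    qed
  qed
qed

lemma S_to_sd:
  assumes H: "\<forall>h. Zs h \<and> Ss h \<longrightarrow> (\<forall>z. h z = 0)"
  shows "strongly_disjoint U a V b"
  unfolding strongly_disjoint_def
proof (intro allI impI ballI)
  fix g x y assume wj: "weight_joining U a V b g" and xy: "x \<in> U \<times> V" "y \<in> U \<times> V"
  define h where "h z = g z - ab z" for z
  have wf: "weight_fun (U \<times> V) g" using wj by (simp add: weight_joining_def)
  have dh: "deg (U \<times> V) h x = deg (U \<times> V) g x - deg (U \<times> V) ab x" for x
    by (simp add: deg_def h_def sum_subtractf)
  have Zh: "Zs h" unfolding Zs_def using strong_support[OF wj] ab_zero by (simp add: h_def)
  have Sh: "Ss h" unfolding Ss_def
  proof (intro conjI ballI)
    fix x y assume "x \<in> U \<times> V" "y \<in> U \<times> V"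
    have "g (x, y) = g (y, x)" using wf unfolding weight_fun_def by blast
    moreover have "ab (x, y) = ab (y, x)" by (simp add: ab_def a_sym b_sym)
    ultimately show "h (x, y) - h (y, x) = 0" by (simp add: h_def)
  next
    fix u assume u: "u \<in> U"
    have "(\<Sum>v\<in>V. deg (U \<times> V) h (u, v)) = (\<Sum>v\<in>V. deg (U \<times> V) g (u, v)) - p u * (\<Sum>v\<in>V. q v)"
      by (simp add: dh ab_deg sum_subtractf sum_distrib_left)
    also have "\<dots> = 0" using wj u sum_q by (simp add: weight_joining_def)
    finally show "(\<Sum>v\<in>V. deg (U \<times> V) h (u, v)) = 0" .
  next
    fix v assume v: "v \<in> V"
    have "(\<Sum>u\<in>U. deg (U \<times> V) h (u, v)) = (\<Sum>u\<in>U. deg (U \<times> V) g (u, v)) - (\<Sum>u\<in>U. p u) * q v"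
      by (simp add: dh ab_deg sum_subtractf sum_distrib_right)
    also have "\<dots> = 0" using wj v sum_p by (simp add: weight_joining_def)
    finally show "(\<Sum>u\<in>U. deg (U \<times> V) h (u, v)) = 0" .
  next
    fix u u' v assume "u \<in> U" "u' \<in> U" "v \<in> V"
    then have c: "p u * (\<Sum>v'\<in>V. g ((u, v), (u', v'))) = a (u, u') * deg (U \<times> V) g (u, v)"
      using wj by (simp add: weight_joining_def)
    have "p u * (\<Sum>v'\<in>V. h ((u, v), (u', v'))) = p u * (\<Sum>v'\<in>V. g ((u, v), (u', v'))) - p u * (a (u, u') * q v)"
      by (simp add: h_def sum_subtractf ab_row right_diff_distrib)
    then show "p u * (\<Sum>v'\<in>V. h ((u, v), (u', v'))) - a (u, u') * deg (U \<times> V) h (u, v) = 0"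
      using c by (simp add: dh ab_deg algebra_simps)
  next
    fix v v' u assume "v \<in> V" "v' \<in> V" "u \<in> U"
    then have c: "q v * (\<Sum>u'\<in>U. g ((u, v), (u', v'))) = b (v, v') * deg (U \<times> V) g (u, v)"
      using wj by (simp add: weight_joining_def)
    have "q v * (\<Sum>u'\<in>U. h ((u, v), (u', v'))) = q v * (\<Sum>u'\<in>U. g ((u, v), (u', v'))) - q v * (b (v, v') * p u)"
      by (simp add: h_def sum_subtractf ab_col right_diff_distrib)
    then show "q v * (\<Sum>u'\<in>U. h ((u, v), (u', v'))) - b (v, v') * deg (U \<times> V) h (u, v) = 0"
      using c by (simp add: dh ab_deg algebra_simps)
  qed
  have "h (x, y) = 0" using H Zh Sh by blast
  then show "g (x, y) = a (fst x, fst y) * b (snd x, snd y)" by (simp add: h_def ab_def)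
qed

lemma sd_to_S:
  assumes sd: "strongly_disjoint U a V b" and Zh: "Zs h" and Sh: "Ss h"
  shows "h z0 = 0"
proof (rule ccontr)
  assume nz: "h z0 \<noteq> 0"
  then have z0X: "z0 \<in> Xs" using Zh unfolding Zs_def by blast
  define m where "m = Min (ab ` Xs)"
  have m0: "m > 0" unfolding m_def using fin_Xs z0X ab_pos by (subst Min_gr_iff) auto
  have mle: "m \<le> ab z" if "z \<in> Xs" for z unfolding m_def using fin_Xs that by simp
  define M where "M = (\<Sum>z\<in>Xs. \<bar>h z\<bar>) + 1"
  have hM: "\<bar>h z\<bar> \<le> M - 1" if "z \<in> Xs" for z
  proof -
    have "\<bar>h z\<bar> \<le> (\<Sum>z\<in>Xs. \<bar>h z\<bar>)" using fin_Xs that by (intro member_le_sum) auto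
    then show ?thesis by (simp add: M_def)
  qed
  have M1: "M \<ge> 1" unfolding M_def by (simp add: sum_nonneg)
  define eps where "eps = m / M"
  have eps0: "eps > 0" using m0 M1 by (simp add: eps_def)
  define g where "g z = ab z + eps * h z" for z
  have g_nn: "g z \<ge> 0" for z
  proof (cases "z \<in> Xs")
    case True
    have "\<bar>eps * h z\<bar> = eps * \<bar>h z\<bar>" using eps0 by (simp add: abs_mult)
    also have "\<dots> \<le> eps * M" using hM[OF True] eps0 by (intro mult_left_mono) auto
    also have "\<dots> = m" using M1 by (simp add: eps_def)
    also have "\<dots> \<le> ab z" by (rule mle[OF True])
    finally show ?thesis by (simp add: g_def)
  next
    case False
    then show ?thesis using ZsD[OF Zh False] ab_zero[OF False] by (simp add: g_def)
  qed
  have h_out: "h z = 0" if "z \<notin> (U \<times> V) \<times> (U \<times> V)" for z using ZsD[OF Zh] Xs_sub that by blast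
  have h_sym: "h (x, y) = h (y, x)" for x y
  proof (cases "x \<in> U \<times> V \<and> y \<in> U \<times> V")
    case True then show ?thesis using SsD1[OF Sh, of x y] by simp
  next
    case False
    then have "(x, y) \<notin> (U \<times> V) \<times> (U \<times> V)" "(y, x) \<notin> (U \<times> V) \<times> (U \<times> V)" by auto
    then show ?thesis using h_out by metis
  qed
  have dg: "deg (U \<times> V) g x = deg (U \<times> V) ab x + eps * deg (U \<times> V) h x" for x
    by (simp add: deg_def g_def sum.distrib sum_distrib_left)
  have sumh: "(\<Sum>z\<in>(U \<times> V) \<times> (U \<times> V). h z) = 0"
  proof -
    have "(\<Sum>z\<in>(U \<times> V) \<times> (U \<times> V). h z) = (\<Sum>u\<in>U. \<Sum>v\<in>V. deg (U \<times> V) h (u, v))"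
      by (simp add: deg_def sum_prod_split)
    also have "\<dots> = 0" using SsD2[OF Sh] by simp
    finally show ?thesis .
  qed
  have sumab: "(\<Sum>z\<in>(U \<times> V) \<times> (U \<times> V). ab z) = 1"
  proof -
    have "(\<Sum>z\<in>(U \<times> V) \<times> (U \<times> V). ab z) = (\<Sum>u\<in>U. \<Sum>v\<in>V. deg (U \<times> V) ab (u, v))"
      by (simp add: deg_def sum_prod_split)
    also have "\<dots> = (\<Sum>u\<in>U. p u * (\<Sum>v\<in>V. q v))" by (simp add: ab_deg sum_distrib_left)
    also have "\<dots> = 1" using sum_p sum_q by simp
    finally show ?thesis .
  qed
  have wj: "weight_joining U a V b g"
    unfolding weight_joining_def weight_fun_def
  proof (intro conjI allI impI ballI)
    fix x y show "0 \<le> g (x, y)" by (rule g_nn)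
    show "g (x, y) = g (y, x)" by (simp add: g_def ab_def a_sym b_sym h_sym)
  next
    fix x y assume "(x, y) \<notin> (U \<times> V) \<times> (U \<times> V)"
    then have "ab (x, y) = 0" using ab_zero Xs_sub by blast
    then show "g (x, y) = 0" using h_out \<open>(x, y) \<notin> _\<close> by (simp add: g_def)
  next
    show "(\<Sum>z\<in>(U \<times> V) \<times> (U \<times> V). g z) = 1" by (simp add: g_def sum.distrib sumh sumab sum_distrib_left[symmetric])
  next
    fix u assume "u \<in> U"
    then show "(\<Sum>v\<in>V. deg (U \<times> V) g (u, v)) = p u"
      using SsD2[OF Sh \<open>u \<in> U\<close>] sum_q by (simp add: dg ab_deg sum.distrib sum_distrib_left[symmetric])
  next
    fix v assume "v \<in> V"
    then show "(\<Sum>u\<in>U. deg (U \<times> V) g (u, v)) = q v"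
      using SsD3[OF Sh \<open>v \<in> V\<close>] sum_p by (simp add: dg ab_deg sum.distrib sum_distrib_left[symmetric] sum_distrib_right[symmetric])
  next
    fix u u' v assume uu: "u \<in> U" "u' \<in> U" "v \<in> V"
    have c: "p u * (\<Sum>v'\<in>V. h ((u, v), (u', v'))) = a (u, u') * deg (U \<times> V) h (u, v)"
      using SsD4[OF Sh uu] .
    have "p u * (\<Sum>v'\<in>V. g ((u, v), (u', v'))) = p u * (a (u, u') * q v) + eps * (p u * (\<Sum>v'\<in>V. h ((u, v), (u', v'))))"
      by (simp add: g_def sum.distrib ab_row sum_distrib_left[symmetric] algebra_simps)
    then show "p u * (\<Sum>v'\<in>V. g ((u, v), (u', v'))) = a (u, u') * deg (U \<times> V) g (u, v)"
      using c by (simp add: dg ab_deg algebra_simps)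
  next
    fix v v' u assume vv: "v \<in> V" "v' \<in> V" "u \<in> U"
    have c: "q v * (\<Sum>u'\<in>U. h ((u, v), (u', v'))) = b (v, v') * deg (U \<times> V) h (u, v)"
      using SsD5[OF Sh vv] .
    have "q v * (\<Sum>u'\<in>U. g ((u, v), (u', v'))) = q v * (b (v, v') * p u) + eps * (q v * (\<Sum>u'\<in>U. h ((u, v), (u', v'))))"
      by (simp add: g_def sum.distrib ab_col sum_distrib_left[symmetric] algebra_simps)
    then show "q v * (\<Sum>u'\<in>U. g ((u, v), (u', v'))) = b (v, v') * deg (U \<times> V) g (u, v)"
      using c by (simp add: dg ab_deg algebra_simps)
  qed
  obtain x y where xy: "z0 = (x, y)" by (cases z0)
  have "x \<in> U \<times> V" "y \<in> U \<times> V" using z0X Xs_sub xy by auto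
  then have "g (x, y) = a (fst x, fst y) * b (snd x, snd y)" using sd wj unfolding strongly_disjoint_def by blast
  then show False using nz eps0 xy by (simp add: g_def ab_def)
qed

theorem strong_char: "strongly_disjoint U a V b \<longleftrightarrow> (\<forall>h. Zs h \<and> Ss h \<longrightarrow> (\<forall>z. h z = 0))"
  using S_to_sd sd_to_S by blast

end

definition Xw :: "'u set \<Rightarrow> ('u \<times> 'u) set \<Rightarrow> 'v set \<Rightarrow> ('v \<times> 'v) set \<Rightarrow> ('u \<times> 'v) set" where
  "Xw U E V F = {u \<in> U. \<exists>u'. (u, u') \<in> E} \<times> {v \<in> V. \<exists>v'. (v, v') \<in> F}"

definition Rw :: "'u set \<Rightarrow> 'v set \<Rightarrow> (('u \<times> 'v) + ('u + 'v)) set" where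
  "Rw U V = Inl ` (U \<times> V) \<union> Inr ` (Inl ` U \<union> Inr ` V)"

definition Lw :: "'u set \<Rightarrow> ('u \<times> 'u \<Rightarrow> real) \<Rightarrow> 'v set \<Rightarrow> ('v \<times> 'v \<Rightarrow> real)
    \<Rightarrow> (('u \<times> 'v) + ('u + 'v)) \<Rightarrow> ('u \<times> 'v \<Rightarrow> real) \<Rightarrow> real" where
  "Lw U a V b r k = (case r of
      Inl (u, v) \<Rightarrow> deg V b v * (\<Sum>u'\<in>U. a (u, u') * k (u', v)) - deg U a u * (\<Sum>v'\<in>V. b (v, v') * k (u, v'))
    | Inr (Inl u) \<Rightarrow> (\<Sum>v\<in>V. deg V b v * k (u, v))
    | Inr (Inr v) \<Rightarrow> (\<Sum>u\<in>U. deg U a u * k (u, v)))"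

definition Xs' :: "('u \<times> 'u) set \<Rightarrow> ('v \<times> 'v) set \<Rightarrow> (('u \<times> 'v) \<times> ('u \<times> 'v)) set" where
  "Xs' E F = {z. (fst (fst z), fst (snd z)) \<in> E \<and> (snd (fst z), snd (snd z)) \<in> F}"

definition Rs :: "'u set \<Rightarrow> 'v set \<Rightarrow> ((('u \<times> 'v) \<times> ('u \<times> 'v)) + ('u + ('v + (('u \<times> 'u \<times> 'v) + ('v \<times> 'v \<times> 'u))))) set" where
  "Rs U V = Inl ` ((U \<times> V) \<times> (U \<times> V)) \<union> Inr ` (Inl ` U \<union> Inr ` (Inl ` V \<union> Inr ` (Inl ` (U \<times> U \<times> V) \<union> Inr ` (V \<times> V \<times> U))))"

definition Ls :: "'u set \<Rightarrow> ('u \<times> 'u \<Rightarrow> real) \<Rightarrow> 'v set \<Rightarrow> ('v \<times> 'v \<Rightarrow> real)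
    \<Rightarrow> ((('u \<times> 'v) \<times> ('u \<times> 'v)) + ('u + ('v + (('u \<times> 'u \<times> 'v) + ('v \<times> 'v \<times> 'u))))) \<Rightarrow> ((('u \<times> 'v) \<times> ('u \<times> 'v)) \<Rightarrow> real) \<Rightarrow> real" where
  "Ls U a V b r h = (case r of
      Inl (x, y) \<Rightarrow> h (x, y) - h (y, x)
    | Inr (Inl u) \<Rightarrow> (\<Sum>v\<in>V. deg (U \<times> V) h (u, v))
    | Inr (Inr (Inl v)) \<Rightarrow> (\<Sum>u\<in>U. deg (U \<times> V) h (u, v))
    | Inr (Inr (Inr (Inl (u, u', v)))) \<Rightarrow> deg U a u * (\<Sum>v'\<in>V. h ((u, v), (u', v'))) - a (u, u') * deg (U \<times> V) h (u, v)
    | Inr (Inr (Inr (Inr (v, v', u)))) \<Rightarrow> deg V b v * (\<Sum>u'\<in>U. h ((u, v), (u', v'))) - b (v, v') * deg (U \<times> V) h (u, v))"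

lemma sum3_cases:
  obtains (A) u v where "r = Inl (u, v)" | (B) u where "r = Inr (Inl u)" | (C) v where "r = Inr (Inr v)"
proof (cases r)
  case (Inl x) then show ?thesis using that(1) by (cases x) auto
next
  case (Inr y) then show ?thesis using that(2,3) by (cases y) auto
qed

lemma sum5_cases:
  obtains (A) x y where "r = Inl (x, y)" | (B) u where "r = Inr (Inl u)" | (C) v where "r = Inr (Inr (Inl v))"
    | (D) u u' v where "r = Inr (Inr (Inr (Inl (u, u', v))))" | (E) v v' u where "r = Inr (Inr (Inr (Inr (v, v', u))))"
proof (cases r)
  case (Inl x) then show ?thesis using that(1) by (cases x) auto
next
  case (Inr y)
  show ?thesis
  proof (cases y)
    case (Inl u) then show ?thesis using that(2) Inr by auto
  next
    case (Inr y2)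
    show ?thesis
    proof (cases y2)
      case (Inl v) then show ?thesis using that(3) Inr \<open>r = Inr y\<close> by auto
    next
      case (Inr y3)
      show ?thesis
      proof (cases y3)
        case (Inl t) then show ?thesis using that(4) \<open>y2 = Inr y3\<close> \<open>y = Inr y2\<close> \<open>r = Inr y\<close> by (cases t) auto
      next
        case (Inr t) then show ?thesis using that(5) \<open>y2 = Inr y3\<close> \<open>y = Inr y2\<close> \<open>r = Inr y\<close> by (cases t) auto
      qed
    qed
  qed
qed

lemma lin_Lw: "lin (Lw U a V b r)"
  unfolding lin_def
  by (cases r rule: sum3_cases) (auto simp: Lw_def sum.distrib sum_distrib_left algebra_simps sum_subtractf)

lemma lin_Ls: "lin (Ls U a V b r)"
  unfolding lin_def
  by (cases r rule: sum5_cases) (auto simp: Ls_def deg_def sum.distrib sum_distrib_left algebra_simps sum_subtractf)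

lemma fin_Rw: "finite U \<Longrightarrow> finite V \<Longrightarrow> finite (Rw U V)" by (simp add: Rw_def)
lemma fin_Rs: "finite U \<Longrightarrow> finite V \<Longrightarrow> finite (Rs U V)" by (simp add: Rs_def)

context wpair
begin

lemma Zw_Xw: "Zw k \<longleftrightarrow> (\<forall>z. z \<notin> Xw U E V F \<longrightarrow> k z = 0)"
  unfolding Zw_def Xw_def U1_def V1_def by auto

lemma Sw_Lw: "Sw k \<longleftrightarrow> (\<forall>r\<in>Rw U V. Lw U a V b r k = 0)"
proof
  assume S: "Sw k"
  show "\<forall>r\<in>Rw U V. Lw U a V b r k = 0"
  proof
    fix r assume r: "r \<in> Rw U V"
    show "Lw U a V b r k = 0"
    proof (cases r rule: sum3_cases)
      case (A u v) then show ?thesis using S r by (auto simp: Rw_def Lw_def Sw_def)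
    next
      case (B u) then show ?thesis using S r by (auto simp: Rw_def Lw_def Sw_def)
    next
      case (C v) then show ?thesis using S r by (auto simp: Rw_def Lw_def Sw_def)
    qed
  qed
next
  assume H: "\<forall>r\<in>Rw U V. Lw U a V b r k = 0"
  have 1: "q v * (\<Sum>u'\<in>U. a (u, u') * k (u', v)) = p u * (\<Sum>v'\<in>V. b (v, v') * k (u, v'))" if "u \<in> U" "v \<in> V" for u v
    using H[rule_format, of "Inl (u, v)"] that by (simp add: Rw_def Lw_def)
  have 2: "(\<Sum>v\<in>V. q v * k (u, v)) = 0" if "u \<in> U" for u
    using H[rule_format, of "Inr (Inl u)"] that by (simp add: Rw_def Lw_def)
  have 3: "(\<Sum>u\<in>U. p u * k (u, v)) = 0" if "v \<in> V" for v
    using H[rule_format, of "Inr (Inr v)"] that by (simp add: Rw_def Lw_def)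
  show "Sw k" unfolding Sw_def using 1 2 3 by blast
qed

lemma Zs_Xs: "Zs h \<longleftrightarrow> (\<forall>z. z \<notin> Xs' E F \<longrightarrow> h z = 0)"
  unfolding Zs_def Xs_def Xs'_def by simp

lemma Ss_Ls: "Ss h \<longleftrightarrow> (\<forall>r\<in>Rs U V. Ls U a V b r h = 0)"
proof
  assume S: "Ss h"
  show "\<forall>r\<in>Rs U V. Ls U a V b r h = 0"
  proof
    fix r assume r: "r \<in> Rs U V"
    show "Ls U a V b r h = 0"
    proof (cases r rule: sum5_cases)
      case (A x y) then show ?thesis using SsD1[OF S] r by (auto simp: Rs_def Ls_def)
    next
      case (B u) then show ?thesis using SsD2[OF S] r by (auto simp: Rs_def Ls_def)
    next
      case (C v) then show ?thesis using SsD3[OF S] r by (auto simp: Rs_def Ls_def)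
    next
      case (D u u' v) then show ?thesis using SsD4[OF S] r by (auto simp: Rs_def Ls_def)
    next
      case (E v v' u) then show ?thesis using SsD5[OF S] r by (auto simp: Rs_def Ls_def)
    qed
  qed
next
  assume H: "\<forall>r\<in>Rs U V. Ls U a V b r h = 0"
  have 1: "h (x, y) - h (y, x) = 0" if "x \<in> U \<times> V" "y \<in> U \<times> V" for x y
    using H[rule_format, of "Inl (x, y)"] that by (simp add: Rs_def Ls_def)
  have 2: "(\<Sum>v\<in>V. deg (U \<times> V) h (u, v)) = 0" if "u \<in> U" for u
    using H[rule_format, of "Inr (Inl u)"] that by (simp add: Rs_def Ls_def)
  have 3: "(\<Sum>u\<in>U. deg (U \<times> V) h (u, v)) = 0" if "v \<in> V" for v
    using H[rule_format, of "Inr (Inr (Inl v))"] that by (simp add: Rs_def Ls_def)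
  have 4: "p u * (\<Sum>v'\<in>V. h ((u, v), (u', v'))) - a (u, u') * deg (U \<times> V) h (u, v) = 0"
    if "u \<in> U" "u' \<in> U" "v \<in> V" for u u' v
    using H[rule_format, of "Inr (Inr (Inr (Inl (u, u', v))))"] that by (simp add: Rs_def Ls_def)
  have 5: "q v * (\<Sum>u'\<in>U. h ((u, v), (u', v'))) - b (v, v') * deg (U \<times> V) h (u, v) = 0"
    if "v \<in> V" "v' \<in> V" "u \<in> U" for v v' u
    using H[rule_format, of "Inr (Inr (Inr (Inr (v, v', u))))"] that by (simp add: Rs_def Ls_def)
  show "Ss h" unfolding Ss_def using 1 2 3 4 5 by blast
qed

end

lemma final_weak:
  assumes GE: "gsetup U E" and GF: "gsetup V F"
  shows "(\<forall>a\<in>Wset U E. \<forall>b\<in>Wset V F. \<not> weakly_disjoint U a V b) \<longleftrightarrow>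
          \<not> (\<exists>A. full_W U E A \<and> (\<forall>a\<in>A. \<exists>B. full_W V F B \<and> (\<forall>b\<in>B. weakly_disjoint U a V b)))"
proof -
  have fU: "finite U" and fV: "finite V" using GE GF by (auto simp: gsetup_def)
  have "finite (Xw U E V F)" using fU fV by (simp add: Xw_def)
  then obtain xs where xs: "distinct xs" "set xs = Xw U E V F" using finite_distinct_list by blast
  define D where "D x y = det (gram (Rw U V) (Lw U (psi E x) V (psi F y)) xs)" for x y
  show ?thesis
  proof (rule dichotomy[OF GE GF])
    fix y
    show "(\<lambda>x. D x y) \<in> polyfun (coord_edges E)"
      unfolding D_def gram_def
    proof (rule det_polyfun)
      fix i j
      have Lp: "(\<lambda>x. Lw U (psi E x) V (psi F y) r f) \<in> polyfun (coord_edges E)" for r f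
        by (cases r rule: sum3_cases)
           (auto simp: Lw_def deg_def fU fV
                 intro!: pf_diff pf_mult pf_sum pf_const gsetup.psi_polyfun[OF GE])
      show "(\<lambda>x. \<Sum>r\<in>Rw U V. Lw U (psi E x) V (psi F y) r (delta (xs ! i)) * Lw U (psi E x) V (psi F y) r (delta (xs ! j))) \<in> polyfun (coord_edges E)"
        by (intro pf_sum pf_mult Lp fin_Rw fU fV)
    qed
  next
    fix x
    show "(\<lambda>y. D x y) \<in> polyfun (coord_edges F)"
      unfolding D_def gram_def
    proof (rule det_polyfun)
      fix i j
      have Lp: "(\<lambda>y. Lw U (psi E x) V (psi F y) r f) \<in> polyfun (coord_edges F)" for r f
        by (cases r rule: sum3_cases)
           (auto simp: Lw_def deg_def fU fV
                 intro!: pf_diff pf_mult pf_sum pf_const gsetup.psi_polyfun[OF GF])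
      show "(\<lambda>y. \<Sum>r\<in>Rw U V. Lw U (psi E x) V (psi F y) r (delta (xs ! i)) * Lw U (psi E x) V (psi F y) r (delta (xs ! j))) \<in> polyfun (coord_edges F)"
        by (intro pf_sum pf_mult Lp fin_Rw fU fV)
    qed
  next
    fix a b assume a: "a \<in> Wset U E" and b: "b \<in> Wset V F"
    interpret wpair U E V F a b unfolding wpair_def using GE GF a b by blast
    have "D (chart E a) (chart F b) = det (gram (Rw U V) (Lw U a V b) xs)"
      by (simp add: D_def gsetup.psi_chart[OF GE a] gsetup.psi_chart[OF GF b])
    also have "\<dots> \<noteq> 0 \<longleftrightarrow> (\<forall>k. (\<forall>z. z \<notin> set xs \<longrightarrow> k z = 0) \<and> (\<forall>r\<in>Rw U V. Lw U a V b r k = 0) \<longrightarrow> (\<forall>z. k z = 0))"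
      by (rule gram_det[OF fin_Rw[OF fU fV] lin_Lw xs(1)])
    also have "\<dots> \<longleftrightarrow> weakly_disjoint U a V b"
      unfolding weak_char Zw_Xw Sw_Lw xs(2) ..
    finally show "weakly_disjoint U a V b \<longleftrightarrow> D (chart E a) (chart F b) \<noteq> 0" by blast
  qed
qed

lemma final_strong:
  assumes GE: "gsetup U E" and GF: "gsetup V F"
  shows "(\<forall>a\<in>Wset U E. \<forall>b\<in>Wset V F. \<not> strongly_disjoint U a V b) \<longleftrightarrow>
          \<not> (\<exists>A. full_W U E A \<and> (\<forall>a\<in>A. \<exists>B. full_W V F B \<and> (\<forall>b\<in>B. strongly_disjoint U a V b)))"
proof -
  have fU: "finite U" and fV: "finite V" using GE GF by (auto simp: gsetup_def)
  have EU: "E \<subseteq> U \<times> U" and FV: "F \<subseteq> V \<times> V" using GE GF by (auto simp: gsetup_def)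
  have "Xs' E F \<subseteq> (U \<times> V) \<times> (U \<times> V)" using EU FV by (auto simp: Xs'_def)
  then have "finite (Xs' E F)" using fU fV by (meson finite_SigmaI finite_subset)
  then obtain xs where xs: "distinct xs" "set xs = Xs' E F" using finite_distinct_list by blast
  define D where "D x y = det (gram (Rs U V) (Ls U (psi E x) V (psi F y)) xs)" for x y
  show ?thesis
  proof (rule dichotomy[OF GE GF])
    fix y
    show "(\<lambda>x. D x y) \<in> polyfun (coord_edges E)"
      unfolding D_def gram_def
    proof (rule det_polyfun)
      fix i j
      have Lp: "(\<lambda>x. Ls U (psi E x) V (psi F y) r f) \<in> polyfun (coord_edges E)" for r f
        by (cases r rule: sum5_cases)
           (auto simp: Ls_def deg_def fU fV
                 intro!: pf_diff pf_mult pf_sum pf_const gsetup.psi_polyfun[OF GE])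
      show "(\<lambda>x. \<Sum>r\<in>Rs U V. Ls U (psi E x) V (psi F y) r (delta (xs ! i)) * Ls U (psi E x) V (psi F y) r (delta (xs ! j))) \<in> polyfun (coord_edges E)"
        by (intro pf_sum pf_mult Lp fin_Rs fU fV)
    qed
  next
    fix x
    show "(\<lambda>y. D x y) \<in> polyfun (coord_edges F)"
      unfolding D_def gram_def
    proof (rule det_polyfun)
      fix i j
      have Lp: "(\<lambda>y. Ls U (psi E x) V (psi F y) r f) \<in> polyfun (coord_edges F)" for r f
        by (cases r rule: sum5_cases)
           (auto simp: Ls_def deg_def fU fV
                 intro!: pf_diff pf_mult pf_sum pf_const gsetup.psi_polyfun[OF GF])
      show "(\<lambda>y. \<Sum>r\<in>Rs U V. Ls U (psi E x) V (psi F y) r (delta (xs ! i)) * Ls U (psi E x) V (psi F y) r (delta (xs ! j))) \<in> polyfun (coord_edges F)"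
        by (intro pf_sum pf_mult Lp fin_Rs fU fV)
    qed
  next
    fix a b assume a: "a \<in> Wset U E" and b: "b \<in> Wset V F"
    interpret wpair U E V F a b unfolding wpair_def using GE GF a b by blast
    have "D (chart E a) (chart F b) = det (gram (Rs U V) (Ls U a V b) xs)"
      by (simp add: D_def gsetup.psi_chart[OF GE a] gsetup.psi_chart[OF GF b])
    also have "\<dots> \<noteq> 0 \<longleftrightarrow> (\<forall>k. (\<forall>z. z \<notin> set xs \<longrightarrow> k z = 0) \<and> (\<forall>r\<in>Rs U V. Ls U a V b r k = 0) \<longrightarrow> (\<forall>z. k z = 0))"
      by (rule gram_det[OF fin_Rs[OF fU fV] lin_Ls xs(1)])
    also have "\<dots> \<longleftrightarrow> strongly_disjoint U a V b"
      unfolding strong_char Zs_Xs Ss_Ls xs(2) ..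
    finally show "strongly_disjoint U a V b \<longleftrightarrow> D (chart E a) (chart F b) \<noteq> 0" by blast
  qed
qed

theorem proposition6p1:
  fixes U :: "'u set" and V :: "'v set"
    and E :: "('u \<times> 'u) set" and F :: "('v \<times> 'v) set"
  assumes "finite U" "finite V"
    and "E \<subseteq> U \<times> U" "F \<subseteq> V \<times> V"
    and "sym E" "sym F"
    and "E \<noteq> {}" "F \<noteq> {}"
  shows "((\<forall>a\<in>Wset U E. \<forall>b\<in>Wset V F. \<not> weakly_disjoint U a V b) \<longleftrightarrow>
          \<not> (\<exists>A. full_W U E A \<and>
               (\<forall>a\<in>A. \<exists>B. full_W V F B \<and> (\<forall>b\<in>B. weakly_disjoint U a V b))))
       \<and> ((\<forall>a\<in>Wset U E. \<forall>b\<in>Wset V F. \<not> strongly_disjoint U a V b) \<longleftrightarrow>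
          \<not> (\<exists>A. full_W U E A \<and>
               (\<forall>a\<in>A. \<exists>B. full_W V F B \<and> (\<forall>b\<in>B. strongly_disjoint U a V b))))"
proof -
  have GE: "gsetup U E" using assms by (simp add: gsetup_def)
  have GF: "gsetup V F" using assms by (simp add: gsetup_def)
  show ?thesis using final_weak[OF GE GF] final_strong[OF GE GF] by blast
qed

end
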